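(* Let $\varphi$ be an Orlicz $N$-function with Young–Fenchel transform $\psi$ and let $q_\varphi$ be the generalized inverse of the density of $\varphi$. Let $\{X_{k,n},k,n\ge1\}$ be a double array of independent $\varphi$-subgaussian random variables and $g$ a positive non-decreasing function with $\tau_\varphi(X_{k,n})\le g(\ln(kn))$ for all $k,n\ge1$. Set $a_{m,j}=g(\ln(mj))\psi^{-1}(\ln(mj))$ and $Y_{m,j}=\max_{1\le k\le m,1\le n\le j}X_{k,n}-a_{m,j}$. Assume: (1) there exists $\varepsilon_0>0$ such that for every $\varepsilon\in(0,\varepsilon_0]$, $\int_0^\infty\psi(x)q_\varphi(x)\exp\left(-\frac{\varepsilon q_\varphi(x)}{g(\psi(x)+\ln 2)}\right)dx<+\infty$; (2) $\kappa$ is a positive increasing differentiable function whose derivative $r=\kappa'$ is non-decreasing on $(0,\infty)$, and there is $C>0$ such that $P\left(\frac{X_{k,n}}{g(\ln(kn))}<x\right)\le\exp(-Ce^{-\kappa(x)})$ for all $k,n\ge1$ and $x>0$; (3) $\psi(x)-\kappa\left(\frac{xg(x)}{g(0)}\right)\ge C_0(x)$ for some function $C_0$; (4) there exist $A,\varepsilon_1>0$ such that for every $\varepsilon\in(0,\varepsilon_1]$ $$\int_A^{+\infty}\exp\left(-\frac{Cy}{2}\exp\left(-\kappa\left(\frac{g(\ln y)}{g(0)}\psi^{-1}(\ln y)-\frac{\varepsilon}{g(\ln y)}\right)\right)\right)dy<+\infty$$ and $$\int_A^{+\infty}\psi(y)q_\varphi(y)\exp\left(\psi(y)-\frac C2\exp\left(C_0(y)+\frac{\varepsilon\,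 r\left(\frac{yg(\psi(y))}{g(0)}-\frac{\varepsilon}{g(\psi(y))}\right)}{g(\psi(y))}\right)\right)dy<+\infty.$$ Then $\lim_{m\vee j\to\infty}Y_{m,j}=0$ almost surely.
   Context: An Orlicz $N$-function is a continuous even convex function $\varphi:\mathbb R\to\mathbb R$ with $\varphi(0)=0$, increasing on $(0,\infty)$, with $\varphi(x)/x\to0$ as $x\to0$ and $\varphi(x)/x\to+\infty$ as $x\to+\infty$. It can be written $\varphi(x)=\int_0^{|x|}p_\varphi(t)\,dt$ with non-decreasing density $p_\varphi$; its generalized inverse is $q_\varphi(t)=\sup\{u\ge0:p_\varphi(u)\le t\}$. The Young–Fenchel transform is $\psi(x)=\sup_{y\in\mathbb R}(xy-\varphi(y))$, with $\psi(x)=\int_0^{|x|}q_\varphi(t)dt$; $\psi^{-1}$ is the inverse of $\psi$ on $[0,\infty)$. A random variable $X$ is $\varphi$-subgaussian if $EX=0$ and there is a finite $a>0$ with $E\exp(tX)\le\exp(\varphi(at))$ for all $t$; $\tau_\varphi(X)=\inf\{a>0:E\exp(tX)\le\exp(\varphi(at))\ \forall t\}$. $\lim_{m\vee j\to\infty}b_{m,j}=b$ means: for every $\varepsilon>0$ there is $N$ with $|b_{m,j}-b|<\varepsilon$ whenever $\max(m,j)\ge N$. *)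

theory Defs
  imports "HOL-Probability.Probability"
begin

definition orlicz_N_function :: "(real \<Rightarrow> real) \<Rightarrow> bool" where
  "orlicz_N_function \<phi> \<longleftrightarrow>
     continuous_on UNIV \<phi> \<and> (\<forall>x. \<phi> (- x) = \<phi> x) \<and> convex_on UNIV \<phi> \<and> \<phi> 0 = 0 \<and>
     strict_mono_on {0<..} \<phi> \<and>
     ((\<lambda>x. \<phi> x / x) \<longlongrightarrow> 0) (at_right 0) \<and>
     filterlim (\<lambda>x. \<phi> x / x) at_top at_top"

definition orlicz_density :: "(real \<Rightarrow> real) \<Rightarrow> (real \<Rightarrow> real) \<Rightarrow> bool" where
  "orlicz_density \<phi> p \<longleftrightarrow> mono_on {0..} p \<and>
     (\<forall>x. p integrable_on {0..\<bar>x\<bar>} \<and> \<phi> x = integral {0..\<bar>x\<bar>} p)"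

definition gen_inverse :: "(real \<Rightarrow> real) \<Rightarrow> real \<Rightarrow> real" where
  "gen_inverse p t = Sup {u. u \<ge> 0 \<and> p u \<le> t}"

definition young_fenchel :: "(real \<Rightarrow> real) \<Rightarrow> real \<Rightarrow> real" where
  "young_fenchel \<phi> x = (SUP y. x * y - \<phi> y)"

definition inv_pos :: "(real \<Rightarrow> real) \<Rightarrow> real \<Rightarrow> real" where
  "inv_pos \<psi> = the_inv_into {0..} \<psi>"

definition mgf_bound :: "'a measure \<Rightarrow> (real \<Rightarrow> real) \<Rightarrow> ('a \<Rightarrow> real) \<Rightarrow> real \<Rightarrow> bool" where
  "mgf_bound M \<phi> X a \<longleftrightarrow>
     (\<forall>t. integrable M (\<lambda>\<omega>. exp (t * X \<omega>)) \<and>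
          (\<integral>\<omega>. exp (t * X \<omega>) \<partial>M) \<le> exp (\<phi> (a * t)))"

definition phi_subgaussian :: "'a measure \<Rightarrow> (real \<Rightarrow> real) \<Rightarrow> ('a \<Rightarrow> real) \<Rightarrow> bool" where
  "phi_subgaussian M \<phi> X \<longleftrightarrow>
     X \<in> borel_measurable M \<and> integrable M X \<and> (\<integral>\<omega>. X \<omega> \<partial>M) = 0 \<and>
     (\<exists>a>0. mgf_bound M \<phi> X a)"

definition tau_phi :: "'a measure \<Rightarrow> (real \<Rightarrow> real) \<Rightarrow> ('a \<Rightarrow> real) \<Rightarrow> real" where
  "tau_phi M \<phi> X = Inf {a. a > 0 \<and> mgf_bound M \<phi> X a}"

definition double_lim :: "(nat \<Rightarrow> nat \<Rightarrow> real) \<Rightarrow> real \<Rightarrow> bool" where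
  "double_lim b l \<longleftrightarrow>
     (\<forall>\<epsilon>>0. \<exists>N. \<forall>m j. m \<ge> 1 \<longrightarrow> j \<ge> 1 \<longrightarrow> max m j \<ge> N \<longrightarrow> \<bar>b m j - l\<bar> < \<epsilon>)"

end

theory Submission
  imports Defs
begin

locale orl =
  fixes \<phi> p :: "real \<Rightarrow> real"
  assumes N: "orlicz_N_function \<phi>" and dens: "orlicz_density \<phi> p"
begin

lemma phi_even: "\<phi> (- x) = \<phi> x" using N by (simp add: orlicz_N_function_def)
lemma phi0: "\<phi> 0 = 0" using N by (simp add: orlicz_N_function_def)
lemma phi_cont: "continuous_on UNIV \<phi>" using N by (simp add: orlicz_N_function_def)
lemma phi_convex: "convex_on UNIV \<phi>" using N by (simp add: orlicz_N_function_def)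
lemma phi_smono: "strict_mono_on {0<..} \<phi>" using N by (simp add: orlicz_N_function_def)
lemma phi_lim0: "((\<lambda>x. \<phi> x / x) \<longlongrightarrow> 0) (at_right 0)" using N by (simp add: orlicz_N_function_def)
lemma phi_liminf: "filterlim (\<lambda>x. \<phi> x / x) at_top at_top" using N by (simp add: orlicz_N_function_def)
lemma p_mono: "0 \<le> x \<Longrightarrow> x \<le> y \<Longrightarrow> p x \<le> p y"
  using dens unfolding orlicz_density_def mono_on_def by auto
lemma p_int: "p integrable_on {0..\<bar>x\<bar>}" using dens by (simp add: orlicz_density_def)
lemma phi_int: "\<phi> x = integral {0..\<bar>x\<bar>} p" using dens by (simp add: orlicz_density_def)

lemma phi_nonneg: "\<phi> x \<ge> 0"
proof -
  have "\<phi> ((1 - 1/2) *\<^sub>R x + (1/2) *\<^sub>R (-x)) \<le> (1 - 1/2) * \<phi> x + (1/2) * \<phi> (-x)"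
    by (rule convex_onD[OF phi_convex]) auto
  then show ?thesis using phi0 phi_even by simp
qed

lemma p_intI: assumes "0 \<le> a" "a \<le> b" shows "p integrable_on {a..b}"
proof -
  have b: "\<bar>b\<bar> = b" using assms by simp
  have "p integrable_on {0..b}" using p_int[of b] unfolding b .
  moreover have "{a..b} \<subseteq> {0..b}" using assms by auto
  ultimately show ?thesis by (rule integrable_subinterval_real)
qed

lemma phi_diff: assumes "0 \<le> a" "a \<le> b" shows "\<phi> b - \<phi> a = integral {a..b} p"
proof -
  have "p integrable_on {0..b}" using p_intI[of 0 b] assms by simp
  hence "integral {0..a} p + integral {a..b} p = integral {0..b} p"
    using assms by (intro Henstock_Kurzweil_Integration.integral_combine) auto
  moreover have "\<bar>a\<bar> = a" "\<bar>b\<bar> = b" using assms by auto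
  ultimately show ?thesis using phi_int[of a] phi_int[of b] by simp
qed

lemma phi_diff_ge:
  assumes "0 \<le> a" "a \<le> b" "\<And>t. a < t \<Longrightarrow> t < b \<Longrightarrow> c \<le> p t"
  shows "c * (b - a) \<le> \<phi> b - \<phi> a"
proof -
  have "integral {a<..<b} (\<lambda>_. c) \<le> integral {a<..<b} p"
    using assms p_intI[of a b] 
    by (intro integral_le) (auto simp: integrable_on_open_interval_real)
  hence "(b - a) * c \<le> integral {a..b} p" using assms(2) by (simp add: integral_open_interval_real[symmetric])
  thus ?thesis using phi_diff[OF assms(1,2)] by (simp add: mult.commute)
qed

lemma phi_diff_le:
  assumes "0 \<le> a" "a \<le> b" "\<And>t. a < t \<Longrightarrow> t < b \<Longrightarrow> p t \<le> c"
  shows "\<phi> b - \<phi> a \<le> c * (b - a)"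
proof -
  have "integral {a<..<b} p \<le> integral {a<..<b} (\<lambda>_. c)"
    using assms p_intI[of a b] 
    by (intro integral_le) (auto simp: integrable_on_open_interval_real)
  hence "integral {a..b} p \<le> (b - a) * c" using assms(2) by (simp add: integral_open_interval_real[symmetric])
  thus ?thesis using phi_diff[OF assms(1,2)] by (simp add: mult.commute)
qed

lemma p0_le: "p 0 \<le> 0"
proof (rule ccontr)
  assume "\<not> p 0 \<le> 0"
  hence pos: "p 0 > 0" by simp
  have "eventually (\<lambda>x. p 0 \<le> \<phi> x / x) (at_right 0)"
  proof (rule eventually_at_rightI[of 0 1])
    fix x :: real assume "x \<in> {0<..<1}"
    hence "p 0 * (x - 0) \<le> \<phi> x - \<phi> 0" by (intro phi_diff_ge) (auto intro: p_mono)
    thus "p 0 \<le> \<phi> x / x" using \<open>x \<in> _\<close> phi0 by (simp add: field_simps)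
  qed simp
  hence "p 0 \<le> 0" using phi_lim0 by (intro tendsto_lowerbound[of _ 0 "at_right 0"]) auto
  with pos show False by simp
qed

definition S :: "real \<Rightarrow> real set" where "S x = {u. u \<ge> 0 \<and> p u \<le> x}"

lemma S_ne: "x \<ge> 0 \<Longrightarrow> 0 \<in> S x" using p0_le by (simp add: S_def)

lemma S_bdd: "bdd_above (S x)"
proof (rule ccontr)
  assume nb: "\<not> bdd_above (S x)"
  have le: "p t \<le> x" if "t \<ge> 0" for t
  proof -
    from nb have "\<forall>M. \<exists>u\<in>S x. M < u" unfolding bdd_above_def by (simp add: not_le)
    then obtain u where "u \<in> S x" "u > t" by blast
    thus ?thesis using that p_mono[of t u] by (auto simp: S_def)
  qed
  have "eventually (\<lambda>y. \<phi> y / y \<le> \<bar>x\<bar>) at_top"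
  proof (rule eventually_at_top_linorderI[of 1])
    fix y :: real assume "y \<ge> 1"
    hence "\<phi> y - \<phi> 0 \<le> x * (y - 0)" by (intro phi_diff_le) (auto intro: le)
    moreover have "x * y \<le> \<bar>x\<bar> * y" using \<open>y\<ge>1\<close> by (intro mult_right_mono) auto
    ultimately have "\<phi> y \<le> \<bar>x\<bar> * y" using phi0 by simp
    thus "\<phi> y / y \<le> \<bar>x\<bar>" using \<open>y\<ge>1\<close> by (simp add: field_simps)
  qed
  moreover have "eventually (\<lambda>y. \<phi> y / y > \<bar>x\<bar>) at_top"
    using phi_liminf by (simp add: filterlim_at_top_dense)
  ultimately have "eventually (\<lambda>y. False) (at_top :: real filter)"
    by eventually_elim simp
  thus False by simp
qed

definition q :: "real \<Rightarrow> real" where "q x = Sup (S x)"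

lemma q_eq: "q = gen_inverse p" unfolding q_def[abs_def] gen_inverse_def S_def by simp

lemma q_nonneg: "x \<ge> 0 \<Longrightarrow> q x \<ge> 0"
  unfolding q_def by (rule cSup_upper[OF S_ne S_bdd])

lemma q_mono: "0 \<le> x \<Longrightarrow> x \<le> y \<Longrightarrow> q x \<le> q y"
proof -
  assume a: "0 \<le> x" "x \<le> y"
  have "S x \<noteq> {}" using S_ne[OF a(1)] by auto
  moreover have "S x \<subseteq> S y" using a by (auto simp: S_def)
  ultimately show ?thesis unfolding q_def by (rule cSup_subset_mono[OF _ S_bdd])
qed

lemma p_gt_q: assumes "x \<ge> 0" "t > q x" shows "p t > x"
proof (rule ccontr)
  assume "\<not> p t > x"
  moreover have "t \<ge> 0" using q_nonneg[OF assms(1)] assms(2) by simp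
  ultimately have "t \<in> S x" by (simp add: S_def)
  hence "t \<le> q x" unfolding q_def by (rule cSup_upper[OF _ S_bdd])
  with assms(2) show False by simp
qed

lemma p_lt_q: assumes "x \<ge> 0" "0 \<le> t" "t < q x" shows "p t \<le> x"
proof -
  have "S x \<noteq> {}" using S_ne[OF assms(1)] by auto
  then obtain u where "u \<in> S x" "t < u"
    using less_cSupD[OF \<open>S x \<noteq> {}\<close> assms(3)[unfolded q_def]] by blast
  thus ?thesis using p_mono[of t u] assms by (auto simp: S_def)
qed

lemma subgrad_phi:
  assumes x: "x \<ge> 0" shows "\<phi> (q x) + x * (w - q x) \<le> \<phi> w"
proof -
  let ?u = "q x"
  have u0: "?u \<ge> 0" using q_nonneg x .
  have pos: "\<phi> ?u + x * (w - ?u) \<le> \<phi> w" if w0: "w \<ge> 0" for w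
  proof (cases "w \<ge> ?u")
    case True
    have "x * (w - ?u) \<le> \<phi> w - \<phi> ?u"
      using u0 True by (intro phi_diff_ge) (auto intro: less_imp_le p_gt_q[OF x])
    thus ?thesis by simp
  next
    case False
    have "\<phi> ?u - \<phi> w \<le> x * (?u - w)"
      using w0 False by (intro phi_diff_le) (auto intro: p_lt_q[OF x])
    thus ?thesis by (simp add: algebra_simps)
  qed
  show ?thesis
  proof (cases "w \<ge> 0")
    case True thus ?thesis using pos by simp
  next
    case False
    have "\<phi> ?u + x * (- w - ?u) \<le> \<phi> (-w)" using pos False by simp
    moreover have "x * (w - ?u) \<le> x * (- w - ?u)" using False x by (intro mult_left_mono) auto
    ultimately show ?thesis using phi_even by simp
  qed
qed

definition \<psi> :: "real \<Rightarrow> real" where "\<psi> = young_fenchel \<phi>"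

lemma psi_eq: assumes x: "x \<ge> 0" shows "\<psi> x = x * q x - \<phi> (q x)"
  unfolding \<psi>_def young_fenchel_def
proof (rule cSup_eq_maximum)
  show "x * q x - \<phi> (q x) \<in> range (\<lambda>y. x * y - \<phi> y)" by auto
  show "\<And>z. z \<in> range (\<lambda>y. x * y - \<phi> y) \<Longrightarrow> z \<le> x * q x - \<phi> (q x)"
    using subgrad_phi[OF x] by (auto simp: algebra_simps)
qed

lemma young: "x \<ge> 0 \<Longrightarrow> x * y - \<phi> y \<le> \<psi> x"
  using subgrad_phi[of x y] psi_eq[of x] by (simp add: algebra_simps)

lemma subgrad_psi: "x \<ge> 0 \<Longrightarrow> y \<ge> 0 \<Longrightarrow> \<psi> x + (y - x) * q x \<le> \<psi> y"
  using young[of y "q x"] psi_eq[of x] by (simp add: algebra_simps)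

lemma q0: "q 0 = 0"
proof (rule ccontr)
  assume "q 0 \<noteq> 0"
  hence u: "q 0 > 0" using q_nonneg[of 0] by simp
  have "\<phi> (q 0) \<le> \<phi> 0" using subgrad_phi[of 0 0] by simp
  moreover have "\<phi> (q 0 / 2) < \<phi> (q 0)" using phi_smono u
    by (intro strict_mono_onD[OF phi_smono]) auto
  ultimately show False using phi0 phi_nonneg[of "q 0 / 2"] by simp
qed

lemma psi0: "\<psi> 0 = 0" using psi_eq[of 0] q0 phi0 by simp

lemma q_pos: assumes "x > 0" shows "q x > 0"
proof -
  have ev: "eventually (\<lambda>u. \<phi> u / u < x / 2) (at_right 0)"
    using phi_lim0 assms by (intro order_tendstoD) auto
  then obtain b where b: "b > 0" "\<forall>y>0. y < b \<longrightarrow> \<phi> y / y < x/2"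
    unfolding eventually_at_right_field by blast
  define u where "u = b / 2"
  have u0: "u > 0" "u < b" using b by (auto simp: u_def)
  have u: "u > 0" "\<phi> u / u < x/2" using b(2) u0 by blast+
  have "p (u/2) * (u - u/2) \<le> \<phi> u - \<phi> (u/2)"
    using u by (intro phi_diff_ge) (auto intro: p_mono)
  hence "p (u/2) * (u/2) \<le> \<phi> u" using phi_nonneg[of "u/2"] by simp
  hence "p (u/2) \<le> 2 * (\<phi> u / u)" using u by (simp add: field_simps)
  hence "p (u/2) \<le> x" using u(2) by linarith
  hence "u/2 \<in> S x" using u by (simp add: S_def)
  hence "u/2 \<le> q x" unfolding q_def using S_bdd by (intro cSup_upper)
  thus ?thesis using u by simp
qed

lemma psi_mono: assumes "0 \<le> x" "x \<le> y" shows "\<psi> x \<le> \<psi> y"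
proof -
  have "(y - x) * q x \<ge> 0" using assms q_nonneg[of x] by (intro mult_nonneg_nonneg) auto
  thus ?thesis using subgrad_psi[of x y] assms by linarith
qed

lemma psi_smono: assumes "0 \<le> x" "x < y" shows "\<psi> x < \<psi> y"
proof -
  have "\<psi> x \<le> \<psi> ((x+y)/2)" using assms by (intro psi_mono) auto
  moreover have "\<psi> ((x+y)/2) + (y - (x+y)/2) * q ((x+y)/2) \<le> \<psi> y"
    using assms by (intro subgrad_psi) auto
  moreover have "q ((x+y)/2) > 0" using assms by (intro q_pos) auto
  moreover have "(y - (x+y)/2) * q ((x+y)/2) > 0" using assms calculation(3) by (intro mult_pos_pos) auto
  ultimately show ?thesis by linarith
qed

lemma psi_nonneg: "x \<ge> 0 \<Longrightarrow> \<psi> x \<ge> 0" using psi_mono[of 0 x] psi0 by simp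

lemma psi_lip: "0 \<le> x \<Longrightarrow> x \<le> y \<Longrightarrow> \<psi> y - \<psi> x \<le> (y - x) * q y"
  using subgrad_psi[of y x] by (simp add: algebra_simps)

lemma psi_cont: "continuous_on {0..} \<psi>"
proof (unfold continuous_on_iff, intro ballI allI impI)
  fix x e :: real assume x': "x \<in> {0..}" and e: "e > 0"
  have x: "x \<ge> 0" using x' by simp
  define B where "B = q (x + 1) + 1"
  have B: "B > 0" unfolding B_def using q_nonneg[of "x+1"] x by simp
  show "\<exists>d>0. \<forall>y\<in>{0..}. dist y x < d \<longrightarrow> dist (\<psi> y) (\<psi> x) < e"
  proof (intro exI[of _ "min 1 (e / B)"] conjI ballI impI)
    show "min 1 (e / B) > 0" using e B by simp
    fix y :: real assume y': "y \<in> {0..}" "dist y x < min 1 (e / B)"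
    have y: "y \<ge> 0" "dist y x < min 1 (e / B)" using y' by auto
    have qb: "q z \<le> B - 1" if "0 \<le> z" "z \<le> x + 1" for z
      unfolding B_def using q_mono that by simp
    have "\<bar>\<psi> y - \<psi> x\<bar> \<le> \<bar>y - x\<bar> * (B - 1)"
    proof (cases "x \<le> y")
      case True
      have "\<psi> y - \<psi> x \<le> (y - x) * q y" using psi_lip True x by simp
      also have "\<dots> \<le> (y - x) * (B - 1)" using True y qb[of y]
        by (intro mult_left_mono) (auto simp: dist_real_def)
      finally show ?thesis using psi_mono[OF x True] True by simp
    next
      case False
      have "\<psi> x - \<psi> y \<le> (x - y) * q x" using psi_lip False y by simp
      also have "\<dots> \<le> (x - y) * (B - 1)" using False x qb[of x]
        by (intro mult_left_mono) auto
      finally show ?thesis using psi_mono[OF y(1)] False by simp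
    qed
    also have "\<dots> < e"
    proof -
      have "\<bar>y - x\<bar> < e / B" using y by (simp add: dist_real_def)
      hence "\<bar>y - x\<bar> * B < e" using B by (simp add: field_simps)
      moreover have "\<bar>y - x\<bar> * (B - 1) \<le> \<bar>y - x\<bar> * B" by (simp add: algebra_simps)
      ultimately show ?thesis by simp
    qed
    finally show "dist (\<psi> y) (\<psi> x) < e" by (simp add: dist_real_def)
  qed
qed

lemma psi_unbounded: "L \<ge> 0 \<Longrightarrow> \<exists>x\<ge>0. \<psi> x \<ge> L"
proof -
  assume L: "L \<ge> 0"
  have q1: "q 1 > 0" by (rule q_pos) simp
  define x where "x = 1 + L / q 1"
  have "\<psi> 1 + (x - 1) * q 1 \<le> \<psi> x" using L q1 by (intro subgrad_psi) (auto simp: x_def)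
  moreover have "(x - 1) * q 1 = L" using q1 by (simp add: x_def)
  ultimately show ?thesis using psi_nonneg[of 1] L q1 by (intro exI[of _ x]) (auto simp: x_def)
qed

lemma psi_surj: "L \<ge> 0 \<Longrightarrow> \<exists>x\<ge>0. \<psi> x = L"
proof -
  assume L: "L \<ge> 0"
  then obtain b where b: "b \<ge> 0" "\<psi> b \<ge> L" using psi_unbounded by blast
  have "\<exists>x\<ge>0. x \<le> b \<and> \<psi> x = L"
    using IVT'[of \<psi> 0 L b] b L psi0 continuous_on_subset[OF psi_cont, of "{0..b}"] by auto
  thus ?thesis by auto
qed

lemma psi_inj: "inj_on \<psi> {0..}"
proof (rule inj_onI)
  fix x y assume xy: "x \<in> {0..}" "y \<in> {0..}" "\<psi> x = \<psi> y"
  show "x = y"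
  proof (rule ccontr)
    assume "x \<noteq> y"
    hence "x < y \<or> y < x" by linarith
    thus False using psi_smono[of x y] psi_smono[of y x] xy by auto
  qed
qed

definition s :: "real \<Rightarrow> real" where "s = inv_pos \<psi>"

lemma s_prop: assumes "L \<ge> 0" shows "s L \<ge> 0" "\<psi> (s L) = L"
proof -
  from psi_surj[OF assms] obtain x where "x \<ge> 0" "\<psi> x = L" by blast
  hence "L \<in> \<psi> ` {0..}" by auto
  thus "s L \<ge> 0" "\<psi> (s L) = L" unfolding s_def inv_pos_def
    using the_inv_into_into[OF psi_inj, of L "{0..}"] f_the_inv_into_f[OF psi_inj, of L] by auto
qed

lemma s_mono: assumes "0 \<le> L" "L \<le> L'" shows "s L \<le> s L'"
proof (rule ccontr)
  assume "\<not> s L \<le> s L'"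
  hence "\<psi> (s L') < \<psi> (s L)" using s_prop[of L'] assms by (intro psi_smono) auto
  thus False using s_prop[of L] s_prop[of L'] assms by simp
qed

lemma s_unbounded: "\<exists>L\<ge>0. s L \<ge> B"
proof -
  have "s (\<psi> (max B 0)) = max B 0"
  proof -
    have "\<psi> (s (\<psi> (max B 0))) = \<psi> (max B 0)" using s_prop psi_nonneg by simp
    moreover have "s (\<psi> (max B 0)) \<in> {0..}" using s_prop psi_nonneg by simp
    moreover have "max B 0 \<in> {0..}" by simp
    ultimately show ?thesis by (rule inj_onD[OF psi_inj])
  qed
  thus ?thesis using psi_nonneg[of "max B 0"] by (intro exI[of _ "\<psi> (max B 0)"]) auto
qed

end

context orl begin

lemma phi_abs: "\<phi> \<bar>x\<bar> = \<phi> x"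
  by (cases "x \<ge> 0") (auto simp: phi_even)

lemma phi_abs_mono: assumes "\<bar>x\<bar> \<le> \<bar>y\<bar>" shows "\<phi> x \<le> \<phi> y"
proof -
  have "\<phi> \<bar>x\<bar> \<le> \<phi> \<bar>y\<bar>"
  proof (cases "\<bar>x\<bar> = 0")
    case True thus ?thesis using phi0 phi_nonneg by simp
  next
    case False
    show ?thesis
    proof (cases "\<bar>x\<bar> = \<bar>y\<bar>")
      case True thus ?thesis by simp
    next
      case False
      hence "\<bar>x\<bar> < \<bar>y\<bar>" using assms by simp
      thus ?thesis using \<open>\<bar>x\<bar> \<noteq> 0\<close> by (intro less_imp_le strict_mono_onD[OF phi_smono]) auto
    qed
  qed
  thus ?thesis by (simp add: phi_abs)
qed

lemma phi_isCont: "isCont \<phi> z"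
  using phi_cont by (simp add: continuous_on_eq_continuous_at)

lemma mgf_at:
  assumes sg: "phi_subgaussian M \<phi> X" and tb: "tau_phi M \<phi> X \<le> b" and b: "b > 0"
  shows "integrable M (\<lambda>\<omega>. exp (t * X \<omega>))" "(\<integral>\<omega>. exp (t * X \<omega>) \<partial>M) \<le> exp (\<phi> (b * t))"
proof -
  define T where "T = {a. a > 0 \<and> mgf_bound M \<phi> X a}"
  have ne: "T \<noteq> {}" using sg by (auto simp: T_def phi_subgaussian_def)
  have bdd: "bdd_below T" unfolding T_def by (rule bdd_belowI[of _ 0]) auto
  have up: "integrable M (\<lambda>\<omega>. exp (t * X \<omega>)) \<and> (\<integral>\<omega>. exp (t * X \<omega>) \<partial>M) \<le> exp (\<phi> (a' * t))"
    if a': "a' > b" for a'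
  proof -
    have "Inf T < a'" using tb a' by (simp add: tau_phi_def T_def)
    then obtain a where a: "a \<in> T" "a < a'" using cInf_lessD[OF ne] by blast
    hence mg: "mgf_bound M \<phi> X a" "a > 0" by (auto simp: T_def)
    have "\<phi> (a * t) \<le> \<phi> (a' * t)" using a mg(2)
      by (intro phi_abs_mono) (auto simp: abs_mult intro!: mult_right_mono)
    thus ?thesis using mg(1) unfolding mgf_bound_def by (meson exp_le_cancel_iff order_trans)
  qed
  show "integrable M (\<lambda>\<omega>. exp (t * X \<omega>))" using up[of "b+1"] by simp
  have lim: "((\<lambda>a'. exp (\<phi> (a' * t))) \<longlongrightarrow> exp (\<phi> (b * t))) (at_right b)"
  proof -
    have "isCont (\<phi> \<circ> (\<lambda>a'. a' * t)) b"
      by (rule continuous_at_compose) (auto intro: phi_isCont)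
    hence "isCont (\<lambda>a'. \<phi> (a' * t)) b" by (simp add: o_def)
    hence "((\<lambda>a'. \<phi> (a' * t)) \<longlongrightarrow> \<phi> (b * t)) (at b)" by (simp add: isCont_def)
    hence "((\<lambda>a'. \<phi> (a' * t)) \<longlongrightarrow> \<phi> (b * t)) (at_right b)"
      by (rule tendsto_within_subset) auto
    thus ?thesis by (rule tendsto_exp)
  qed
  have ev: "eventually (\<lambda>a'. (\<integral>\<omega>. exp (t * X \<omega>) \<partial>M) \<le> exp (\<phi> (a' * t))) (at_right b)"
    by (rule eventually_at_rightI[of b "b+1"]) (use up in auto)
  show "(\<integral>\<omega>. exp (t * X \<omega>) \<partial>M) \<le> exp (\<phi> (b * t))"
    by (rule tendsto_lowerbound[OF lim ev]) simp
qed

lemma chernoff: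
  assumes M: "prob_space M" and Xm: "X \<in> borel_measurable M"
    and mgf: "\<And>t. integrable M (\<lambda>\<omega>. exp (t * X \<omega>)) \<and> (\<integral>\<omega>. exp (t * X \<omega>) \<partial>M) \<le> exp (\<phi> (b * t))"
    and b: "b > 0" and s: "x > 0" and d: "\<delta> \<ge> 0"
  shows "measure M {\<omega>\<in>space M. X \<omega> \<ge> b * (x + \<delta>)} \<le> exp (- \<psi> x - \<delta> * q x)"
proof -
  interpret prob_space M by (rule M)
  define l where "l = q x / b"
  have qx: "q x > 0" using q_pos[OF s] .
  have l: "l > 0" using qx b by (simp add: l_def)
  have eq: "{\<omega>\<in>space M. X \<omega> \<ge> b * (x + \<delta>)} = {\<omega>\<in>space M. exp (l * X \<omega>) \<ge> exp (l * (b * (x + \<delta>)))}"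
    using l by auto
  have 1: "measure M {\<omega>\<in>space M. exp (l * X \<omega>) \<ge> exp (l * (b * (x + \<delta>)))}
      \<le> (\<integral>\<omega>. exp (l * X \<omega>) \<partial>M) / exp (l * (b * (x + \<delta>)))"
    by (rule integral_Markov_inequality_measure[of _ _ "space M"]) (use mgf in auto)
  have 2: "(\<integral>\<omega>. exp (l * X \<omega>) \<partial>M) / exp (l * (b * (x + \<delta>))) \<le> exp (\<phi> (b * l)) / exp (l * (b * (x + \<delta>)))"
    by (rule divide_right_mono) (use mgf in auto)
  have bl: "b * l = q x" using b by (simp add: l_def)
  have lb: "l * (b * (x + \<delta>)) = q x * x + \<delta> * q x" using b by (simp add: l_def algebra_simps)
  have 3: "exp (\<phi> (b * l)) / exp (l * (b * (x + \<delta>))) = exp (- \<psi> x - \<delta> * q x)"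
    unfolding bl lb using psi_eq[of x] s by (simp add: exp_diff[symmetric] algebra_simps)
  have "measure M {\<omega>\<in>space M. exp (l * X \<omega>) \<ge> exp (l * (b * (x + \<delta>)))} \<le> exp (- \<psi> x - \<delta> * q x)"
    using 1 2 3 by linarith
  thus ?thesis unfolding eq .

qed

end

lemma suminf_single_ennreal:
  fixes f :: "nat \<Rightarrow> ennreal"
  assumes "\<And>j. j \<noteq> i \<Longrightarrow> f j = 0"
  shows "suminf f = f i"
  using suminf_finite[of "{i}" f] assms by auto

lemma summable_pairs:
  fixes f :: "nat \<times> nat \<Rightarrow> real" and F :: "nat \<Rightarrow> (nat \<times> nat) set"
  assumes nn: "\<And>p. f p \<ge> 0" and fin: "\<And>i. finite (F i)" and disj: "disjoint_family F"
    and cov: "\<And>p. f p \<noteq> 0 \<Longrightarrow> \<exists>i. p \<in> F i"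
    and sm: "summable (\<lambda>i. \<Sum>p\<in>F i. f p)"
  shows "summable (\<lambda>j. f (prod_decode j))"
proof (rule summable_suminf_not_top)
  show "\<And>j. 0 \<le> f (prod_decode j)" using nn by simp
  have "(\<Sum>j. ennreal (f (prod_decode j))) = (\<integral>\<^sup>+j. ennreal (f (prod_decode j)) \<partial>count_space UNIV)"
    by (simp add: nn_integral_count_space_nat)
  also have "\<dots> = (\<integral>\<^sup>+p. ennreal (f p) \<partial>count_space UNIV)"
    by (rule nn_integral_bij_count_space[of prod_decode UNIV UNIV "\<lambda>p. ennreal (f p)"])
       (simp add: bij_prod_decode)
  also have "\<dots> = (\<integral>\<^sup>+p. (\<Sum>i. ennreal (f p) * indicator (F i) p) \<partial>count_space UNIV)"
  proof (rule nn_integral_cong)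
    fix p :: "nat \<times> nat"
    show "ennreal (f p) = (\<Sum>i. ennreal (f p) * indicator (F i) p)"
    proof (cases "f p = 0")
      case True thus ?thesis by simp
    next
      case False
      then obtain i where i: "p \<in> F i" using cov by blast
      have "(\<Sum>i. ennreal (f p) * indicator (F i) p) = ennreal (f p) * indicator (F i) p"
        by (rule suminf_single_ennreal) (use disj i in \<open>auto simp: disjoint_family_on_def indicator_def\<close>)
      thus ?thesis using i by simp
    qed
  qed
  also have "\<dots> = (\<Sum>i. \<integral>\<^sup>+p. ennreal (f p) * indicator (F i) p \<partial>count_space UNIV)"
    by (rule nn_integral_suminf) simp
  also have "\<dots> = (\<Sum>i. ennreal (\<Sum>p\<in>F i. f p))"
  proof (rule suminf_cong)
    fix i
    have "(\<integral>\<^sup>+p. ennreal (f p) * indicator (F i) p \<partial>count_space UNIV) = (\<Sum>p\<in>F i. ennreal (f p) * emeasure (count_space UNIV) {p})"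
      by (rule nn_integral_indicator_finite[OF fin]) simp
    also have "\<dots> = (\<Sum>p\<in>F i. ennreal (f p))" by simp
    also have "\<dots> = ennreal (\<Sum>p\<in>F i. f p)" using nn by (simp add: sum_ennreal)
    finally show "(\<integral>\<^sup>+p. ennreal (f p) * indicator (F i) p \<partial>count_space UNIV) = ennreal (\<Sum>p\<in>F i. f p)" .
  qed
  also have "\<dots> = ennreal (\<Sum>i. \<Sum>p\<in>F i. f p)"
    by (rule suminf_ennreal2[OF _ sm]) (simp add: nn sum_nonneg)
  finally show "(\<Sum>j. ennreal (f (prod_decode j))) \<noteq> top" by simp
qed

lemma summable_from_integral:
  fixes f :: "nat \<Rightarrow> real \<Rightarrow> real" and c :: "nat \<Rightarrow> real" and I :: "real \<Rightarrow> ennreal"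
  assumes meas: "\<And>i. f i \<in> borel_measurable lborel" and nn: "\<And>i x. f i x \<ge> 0"
    and disj: "\<And>i j x. f i x \<noteq> 0 \<Longrightarrow> f j x \<noteq> 0 \<Longrightarrow> i = j"
    and le: "\<And>i x. ennreal (f i x) \<le> I x" and fin: "(\<integral>\<^sup>+x. I x \<partial>lborel) < \<infinity>"
    and cnn: "\<And>i. c i \<ge> 0" and cle: "\<And>i. ennreal (c i) \<le> (\<integral>\<^sup>+x. ennreal (f i x) \<partial>lborel)"
  shows "summable c"
proof (rule summable_suminf_not_top[OF cnn])
  have "(\<Sum>i. ennreal (c i)) \<le> (\<Sum>i. \<integral>\<^sup>+x. ennreal (f i x) \<partial>lborel)"
    by (intro suminf_le cle) auto
  also have "\<dots> = (\<integral>\<^sup>+x. (\<Sum>i. ennreal (f i x)) \<partial>lborel)"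
    by (rule nn_integral_suminf[symmetric]) (use meas in measurable)
  also have "\<dots> \<le> (\<integral>\<^sup>+x. I x \<partial>lborel)"
  proof (rule nn_integral_mono)
    fix x
    show "(\<Sum>i. ennreal (f i x)) \<le> I x"
    proof (cases "\<exists>i. f i x \<noteq> 0")
      case True
      then obtain i where i: "f i x \<noteq> 0" by blast
      have "(\<Sum>j. ennreal (f j x)) = ennreal (f i x)"
      proof (rule suminf_single_ennreal)
        fix j assume "j \<noteq> i"
        hence "f j x = 0" using disj[of j x i] i by blast
        thus "ennreal (f j x) = 0" by simp
      qed
      thus ?thesis using le by simp
    next
      case False thus ?thesis by simp
    qed
  qed
  finally show "(\<Sum>i. ennreal (c i)) \<noteq> top" using fin by (auto simp: top_unique)
qed

lemma harm_ln: "(\<Sum>k\<in>{1..K}. 1 / real k) \<le> 1 + ln (real K)"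
proof (induction K)
  case 0 thus ?case by simp
next
  case (Suc K)
  show ?case
  proof (cases "K = 0")
    case True thus ?thesis by simp
  next
    case False
    have "ln (real K / real (Suc K)) \<le> real K / real (Suc K) - 1"
      using False by (intro ln_le_minus_one) auto
    moreover have "ln (real K / real (Suc K)) = ln (real K) - ln (real (Suc K))"
      using False by (intro ln_divide_pos) auto
    moreover have "real K / real (Suc K) - 1 = - (1 / real (Suc K))" by (simp add: field_simps)
    ultimately have "1 / real (Suc K) \<le> ln (real (Suc K)) - ln (real K)" by linarith
    moreover have "(\<Sum>k\<in>{1..Suc K}. 1 / real k) = (\<Sum>k\<in>{1..K}. 1 / real k) + 1 / real (Suc K)"
      by simp
    ultimately show ?thesis using Suc.IH by linarith
  qed
qed

lemma count_pairs:
  fixes X :: real assumes X: "X \<ge> 1"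
  shows "real (card {(k, n). k \<ge> 1 \<and> n \<ge> 1 \<and> real (k * n) < X}) \<le> X * (1 + ln X)"
proof -
  define K where "K = nat \<lfloor>X\<rfloor>"
  define A where "A = (SIGMA k:{1..K}. {1..nat \<lfloor>X / real k\<rfloor>})"
  have sub: "{(k, n). k \<ge> 1 \<and> n \<ge> 1 \<and> real (k * n) < X} \<subseteq> A"
  proof clarify
    fix k n :: nat assume kn: "k \<ge> 1" "n \<ge> 1" "real (k * n) < X"
    have "real k \<le> real (k * n)" using kn by simp
    hence "real k \<le> X" using kn by linarith
    hence "k \<le> K" unfolding K_def using kn by (simp add: le_nat_floor)
    moreover have "real n \<le> X / real k" using kn by (simp add: field_simps)
    hence "n \<le> nat \<lfloor>X / real k\<rfloor>" by (simp add: le_nat_floor)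
    ultimately show "(k, n) \<in> A" using kn by (auto simp: A_def)
  qed
  have finA: "finite A" by (simp add: A_def)
  have c1: "card {(k, n). k \<ge> 1 \<and> n \<ge> 1 \<and> real (k * n) < X} \<le> card A"
    by (rule card_mono[OF finA sub])
  have c2: "card A = (\<Sum>k\<in>{1..K}. nat \<lfloor>X / real k\<rfloor>)" unfolding A_def
    by (subst card_SigmaI) auto
  have "card {(k, n). k \<ge> 1 \<and> n \<ge> 1 \<and> real (k * n) < X} \<le> (\<Sum>k\<in>{1..K}. nat \<lfloor>X / real k\<rfloor>)"
    using c1 c2 by simp
  hence "real (card {(k, n). k \<ge> 1 \<and> n \<ge> 1 \<and> real (k * n) < X}) \<le> real (\<Sum>k\<in>{1..K}. nat \<lfloor>X / real k\<rfloor>)"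
    by (rule of_nat_mono)
  also have "\<dots> = (\<Sum>k\<in>{1..K}. real (nat \<lfloor>X / real k\<rfloor>))" by (rule of_nat_sum)
  also have "\<dots> \<le> (\<Sum>k\<in>{1..K}. X * (1 / real k))"
  proof (rule sum_mono)
    fix k assume "k \<in> {1..K}"
    have "real (nat \<lfloor>X / real k\<rfloor>) \<le> X / real k" using X by simp
    thus "real (nat \<lfloor>X / real k\<rfloor>) \<le> X * (1 / real k)" by simp
  qed
  also have "\<dots> = X * (\<Sum>k\<in>{1..K}. 1 / real k)" by (simp add: sum_distrib_left)
  also have "\<dots> \<le> X * (1 + ln (real K))" using X harm_ln[of K] by (intro mult_left_mono) auto
  also have "\<dots> \<le> X * (1 + ln X)"
  proof -
    have "real K \<le> X" "real K > 0" using X by (auto simp: K_def)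
    hence "ln (real K) \<le> ln X" by simp
    thus ?thesis using X by (intro mult_left_mono) auto
  qed
  finally show ?thesis .
qed

context orl begin

lemma step_lower:
  assumes u: "0 \<le> u" and uv: "u \<le> v"
  shows "\<exists>f. f \<in> borel_measurable lborel \<and> (\<forall>x. 0 \<le> f x) \<and> (\<forall>x. x \<notin> {u..<v} \<longrightarrow> f x = 0)
     \<and> (\<forall>x\<in>{u..<v}. f x \<le> q x) \<and> ennreal ((\<psi> v - \<psi> u) / 2) \<le> (\<integral>\<^sup>+x. ennreal (f x) \<partial>lborel)"
proof (cases "u < v")
  case False
  hence "u = v" using uv by simp
  thus ?thesis by (intro exI[of _ "\<lambda>_. 0"]) auto
next
  case True
  define D where "D = \<psi> v - \<psi> u"
  define Q where "Q = q v - q u"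
  have Q: "Q \<ge> 0" using q_mono[OF u uv] by (simp add: Q_def)
  have D: "D > 0" using psi_smono[OF u True] by (simp add: D_def)
  define M :: nat where "M = nat \<lceil>2 * Q * (v - u) / D\<rceil> + 1"
  have M: "M \<ge> 1" by (simp add: M_def)
  define \<Delta> where "\<Delta> = (v - u) / real M"
  have \<Delta>: "\<Delta> > 0" using True M by (simp add: \<Delta>_def)
  define t where "t j = u + real j * \<Delta>" for j :: nat
  have tM: "t M = v" using M by (simp add: t_def \<Delta>_def)
  have t0: "t 0 = u" by (simp add: t_def)
  have tSuc: "t (Suc j) = t j + \<Delta>" for j by (simp add: t_def algebra_simps)
  have tge: "t j \<ge> u" for j using \<Delta> by (simp add: t_def)
  have tmono: "t j \<le> t j'" if "j \<le> j'" for j j' using \<Delta> that by (simp add: t_def mult_right_mono)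
  define f where "f x = (\<Sum>j<M. q (t j) * indicator {t j..<t (Suc j)} x)" for x
  have qt: "q (t j) \<ge> 0" for j using q_nonneg[of "t j"] tge[of j] u by simp
  have meas: "f \<in> borel_measurable lborel" unfolding f_def by measurable
  have nn: "0 \<le> f x" for x unfolding f_def using qt by (intro sum_nonneg) auto
  have uniq: "j = nat \<lfloor>(x - u) / \<Delta>\<rfloor>" if "t j \<le> x" "x < t (Suc j)" for x j
  proof -
    have "real j \<le> (x - u) / \<Delta>" "(x - u) / \<Delta> < real j + 1"
      using that \<Delta> by (auto simp: t_def field_simps)
    hence "\<lfloor>(x - u) / \<Delta>\<rfloor> = int j" by (simp add: floor_eq_iff)
    thus ?thesis by simp
  qed
  have support: "f x = 0" if "x \<notin> {u..<v}" for x
  proof -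
    have "indicator {t j..<t (Suc j)} x = (0::real)" if "j < M" for j
    proof -
      have "t (Suc j) \<le> t M" using that by (intro tmono) simp
      thus ?thesis using \<open>x \<notin> {u..<v}\<close> tge[of j] tM by (auto simp: indicator_def)
    qed
    thus ?thesis unfolding f_def by (intro sum.neutral) auto
  qed
  have fle: "f x \<le> q x" if x: "x \<in> {u..<v}" for x
  proof -
    define J where "J = {j\<in>{..<M}. t j \<le> x \<and> x < t (Suc j)}"
    have "f x = (\<Sum>j<M. if t j \<le> x \<and> x < t (Suc j) then q (t j) else 0)"
      unfolding f_def by (intro sum.cong) (auto simp: indicator_def)
    also have "\<dots> = (\<Sum>j\<in>J. q (t j))"
      unfolding J_def by (rule sum.inter_filter[symmetric]) simp
    also have "\<dots> \<le> (\<Sum>j\<in>J. q x)"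
    proof (rule sum_mono)
      fix j assume "j \<in> J"
      thus "q (t j) \<le> q x" using tge[of j] u by (intro q_mono) (auto simp: J_def)
    qed
    also have "\<dots> = real (card J) * q x" by simp
    also have "\<dots> \<le> 1 * q x"
    proof (rule mult_right_mono)
      have "J \<subseteq> {nat \<lfloor>(x - u) / \<Delta>\<rfloor>}" using uniq by (auto simp: J_def)
      hence "card J \<le> 1" using card_mono[of "{nat \<lfloor>(x - u) / \<Delta>\<rfloor>}" J] by simp
      thus "real (card J) \<le> 1" by simp
      show "0 \<le> q x" using q_nonneg x u by simp
    qed
    finally show ?thesis by simp
  qed
  have int: "(\<integral>\<^sup>+x. ennreal (f x) \<partial>lborel) = ennreal (\<Sum>j<M. q (t j) * \<Delta>)"
  proof -
    have "(\<integral>\<^sup>+x. ennreal (f x) \<partial>lborel) = (\<integral>\<^sup>+x. (\<Sum>j<M. ennreal (q (t j)) * indicator {t j..<t (Suc j)} x) \<partial>lborel)"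
      unfolding f_def using qt
      by (intro nn_integral_cong) (simp add: sum_ennreal ennreal_mult indicator_def)
    also have "\<dots> = (\<Sum>j<M. \<integral>\<^sup>+x. ennreal (q (t j)) * indicator {t j..<t (Suc j)} x \<partial>lborel)"
      by (rule nn_integral_sum) auto
    also have "\<dots> = (\<Sum>j<M. ennreal (q (t j)) * ennreal \<Delta>)"
      using \<Delta> by (intro sum.cong refl) (simp add: nn_integral_cmult_indicator tSuc)
    also have "\<dots> = ennreal (\<Sum>j<M. q (t j) * \<Delta>)"
      using qt \<Delta> by (simp add: sum_ennreal ennreal_mult[symmetric])
    finally show ?thesis .
  qed
  have tele: "D \<le> (\<Sum>j<M. q (t j) * \<Delta>) + Q * \<Delta>"
  proof -
    have "D = (\<Sum>j<M. \<psi> (t (Suc j)) - \<psi> (t j))"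
      using sum_lessThan_telescope[of "\<lambda>j. \<psi> (t j)" M] by (simp add: tM t0 D_def)
    also have "\<dots> \<le> (\<Sum>j<M. q (t j) * \<Delta> + (q (t (Suc j)) - q (t j)) * \<Delta>)"
    proof (rule sum_mono)
      fix j
      have "\<psi> (t (Suc j)) - \<psi> (t j) \<le> (t (Suc j) - t j) * q (t (Suc j))"
        using tge[of j] u \<Delta> by (intro psi_lip) (auto simp: tSuc)
      thus "\<psi> (t (Suc j)) - \<psi> (t j) \<le> q (t j) * \<Delta> + (q (t (Suc j)) - q (t j)) * \<Delta>"
        by (simp add: tSuc algebra_simps)
    qed
    also have "\<dots> = (\<Sum>j<M. q (t j) * \<Delta>) + (\<Sum>j<M. q (t (Suc j)) - q (t j)) * \<Delta>"
      by (simp add: sum.distrib sum_distrib_right)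
    also have "(\<Sum>j<M. q (t (Suc j)) - q (t j)) = Q"
      using sum_lessThan_telescope[of "\<lambda>j. q (t j)" M] by (simp add: tM t0 Q_def)
    finally show ?thesis .
  qed
  have "Q * \<Delta> \<le> D / 2"
  proof -
    have "2 * Q * (v - u) / D \<le> real M" unfolding M_def by linarith
    hence "2 * Q * (v - u) \<le> real M * D" using D by (simp add: field_simps)
    hence "Q * ((v - u) / real M) \<le> D / 2" using M by (simp add: field_simps)
    thus ?thesis by (simp add: \<Delta>_def)
  qed
  hence "D / 2 \<le> (\<Sum>j<M. q (t j) * \<Delta>)" using tele by linarith
  hence "ennreal (D / 2) \<le> (\<integral>\<^sup>+x. ennreal (f x) \<partial>lborel)" unfolding int by (rule ennreal_leI)
  thus ?thesis using meas nn support fle unfolding D_def by blast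
qed

end

locale th3 = orl +
  fixes M :: "'a measure" and X :: "nat \<Rightarrow> nat \<Rightarrow> 'a \<Rightarrow> real" and g :: "real \<Rightarrow> real"
  assumes M: "prob_space M"
  and subg: "\<And>k n. k \<ge> 1 \<Longrightarrow> n \<ge> 1 \<Longrightarrow> phi_subgaussian M \<phi> (X k n)"
  and g_pos: "\<And>x. g x > 0" and g_mono: "mono g"
  and tau: "\<And>k n. k \<ge> 1 \<Longrightarrow> n \<ge> 1 \<Longrightarrow> tau_phi M \<phi> (X k n) \<le> g (ln (real (k * n)))"
begin

definition aa :: "real \<Rightarrow> real" where "aa L = g L * s L"

lemma kn_ge1: assumes "k \<ge> 1" "n \<ge> 1" shows "1 \<le> real (k * n)" "ln (real (k * n)) \<ge> 0"
proof -
  have "1 * 1 \<le> k * n" using assms by (intro mult_le_mono) auto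
  thus "1 \<le> real (k * n)" by (metis of_nat_1 of_nat_le_iff mult_1)
  thus "ln (real (k * n)) \<ge> 0" by simp
qed

lemma g_le: "x \<le> y \<Longrightarrow> g x \<le> g y" using g_mono by (simp add: mono_def)

lemma s_pos: "L > 0 \<Longrightarrow> s L > 0"
  using s_prop[of L] psi0 by (cases "s L = 0") auto

lemma aa_mono: "0 \<le> L \<Longrightarrow> L \<le> L' \<Longrightarrow> aa L \<le> aa L'"
  unfolding aa_def using s_prop[of L] g_le[of L L'] s_mono[of L L'] g_pos[of L']
  by (intro mult_mono) auto

lemma aa_ge: "0 \<le> L \<Longrightarrow> g 0 * s L \<le> aa L"
  unfolding aa_def using s_prop[of L] g_le[of 0 L] by (intro mult_right_mono) auto

lemma Xmeas: "k \<ge> 1 \<Longrightarrow> n \<ge> 1 \<Longrightarrow> X k n \<in> borel_measurable M"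
  using subg by (simp add: phi_subgaussian_def)

lemma tail_kn:
  assumes k: "k \<ge> 1" and n: "n \<ge> 1" and L: "ln (real (k * n)) > 0" and e: "\<epsilon> > 0"
  shows "measure M {\<omega>\<in>space M. X k n \<omega> > aa (ln (real (k * n))) + \<epsilon>}
     \<le> exp (- ln (real (k * n))) * exp (- \<epsilon> * q (s (ln (real (k * n)))) / g (ln (real (k * n))))"
proof -
  interpret prob_space M by (rule M)
  define L where "L = ln (real (k * n))"
  define b where "b = g L"
  have b: "b > 0" using g_pos by (simp add: b_def)
  have mg: "integrable M (\<lambda>\<omega>. exp (t * X k n \<omega>)) \<and> (\<integral>\<omega>. exp (t * X k n \<omega>) \<partial>M) \<le> exp (\<phi> (b * t))" for t
    using mgf_at[OF subg[OF k n], of b t] tau[OF k n] b by (auto simp: b_def L_def)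
  have sL: "s L > 0" using s_pos L by (simp add: L_def)
  have "measure M {\<omega>\<in>space M. X k n \<omega> > aa L + \<epsilon>} \<le> measure M {\<omega>\<in>space M. X k n \<omega> \<ge> b * (s L + \<epsilon> / b)}"
  proof (rule finite_measure_mono)
    show "{\<omega>\<in>space M. X k n \<omega> > aa L + \<epsilon>} \<subseteq> {\<omega>\<in>space M. X k n \<omega> \<ge> b * (s L + \<epsilon> / b)}"
      using b by (auto simp: aa_def b_def algebra_simps)
    show "{\<omega>\<in>space M. X k n \<omega> \<ge> b * (s L + \<epsilon> / b)} \<in> sets M"
      using Xmeas[OF k n] by measurable
  qed
  also have "\<dots> \<le> exp (- \<psi> (s L) - \<epsilon> / b * q (s L))"
    by (rule chernoff[OF M Xmeas[OF k n] mg b sL]) (use e b in simp)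
  also have "\<dots> = exp (- L) * exp (- \<epsilon> * q (s L) / g L)"
    using s_prop[of L] L by (simp add: L_def b_def exp_add[symmetric] algebra_simps)
  finally show ?thesis by (simp add: L_def)
qed

lemma upper:
  assumes e: "\<epsilon> > 0"
    and c1: "(\<integral>\<^sup>+ x\<in>{0..}. ennreal (\<psi> x * q x * exp (- \<epsilon> * q x / g (\<psi> x + ln 2))) \<partial>lborel) < \<infinity>"
  shows "AE \<omega> in M. \<exists>Z. \<forall>k n. k \<ge> 1 \<longrightarrow> n \<ge> 1 \<longrightarrow> Z \<le> k * n \<longrightarrow> X k n \<omega> \<le> aa (ln (real (k * n))) + \<epsilon>"
proof -
  interpret prob_space M by (rule M)
  define h :: real where "h = ln 2 / 2"
  have h: "h > 0" by (simp add: h_def)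
  have h2: "ln 2 = 2 * h" by (simp add: h_def)
  define G where "G i = exp (- \<epsilon> * q (s (real i * h)) / g ((real i + 1) * h))" for i :: nat
  have G: "G i > 0" for i by (simp add: G_def)
  have sumG: "summable (\<lambda>i. (real i + 1) * G i)"
  proof -
    define u where "u i = s ((real i - 1) * h)" for i :: nat
    define v where "v i = s (real i * h)" for i :: nat
    have uv: "0 \<le> u i \<and> u i \<le> v i" if "i \<ge> 1" for i
      using that s_prop[of "(real i - 1) * h"] h s_mono[of "(real i - 1) * h" "real i * h"]
      by (auto simp: u_def v_def)
    have "\<forall>i. \<exists>f. i \<ge> 1 \<longrightarrow> (f \<in> borel_measurable lborel \<and> (\<forall>x. 0 \<le> f x) \<and> (\<forall>x. x \<notin> {u i..<v i} \<longrightarrow> f x = 0)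
     \<and> (\<forall>x\<in>{u i..<v i}. f x \<le> q x) \<and> ennreal ((\<psi> (v i) - \<psi> (u i)) / 2) \<le> (\<integral>\<^sup>+x. ennreal (f x) \<partial>lborel))"
      using step_lower uv by blast
    then obtain stp where stp: "\<And>i. i \<ge> 1 \<Longrightarrow> stp i \<in> borel_measurable lborel \<and> (\<forall>x. 0 \<le> stp i x) \<and> (\<forall>x. x \<notin> {u i..<v i} \<longrightarrow> stp i x = 0)
     \<and> (\<forall>x\<in>{u i..<v i}. stp i x \<le> q x) \<and> ennreal ((\<psi> (v i) - \<psi> (u i)) / 2) \<le> (\<integral>\<^sup>+x. ennreal (stp i x) \<partial>lborel)"
      by metis
    have psiu: "\<psi> (u i) = (real i - 1) * h" if "i \<ge> 1" for i
      using s_prop[of "(real i - 1) * h"] that h by (simp add: u_def)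
    have psiv: "\<psi> (v i) = real i * h" for i
      using s_prop[of "real i * h"] h by (simp add: v_def)
    define fam where "fam i x = (if i \<ge> 2 then (real i - 1) * h * G i * stp i x else 0)" for i x
    define c where "c i = (if i \<ge> 2 then (real i - 1) * h * G i * (h / 2) else 0)" for i
    have "summable c"
    proof (rule summable_from_integral[where f = fam and I = "\<lambda>x. ennreal (\<psi> x * q x * exp (- \<epsilon> * q x / g (\<psi> x + ln 2))) * indicator {0..} x"])
      show "fam i \<in> borel_measurable lborel" for i
        using stp[of i] unfolding fam_def by (cases "i \<ge> 2") auto
      show "0 \<le> fam i x" for i x
        using stp[of i] G[of i] h unfolding fam_def by (cases "i \<ge> 2") auto
      show "i = j" if "fam i x \<noteq> 0" "fam j x \<noteq> 0" for i j x
      proof (rule ccontr)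
        assume ij: "i \<noteq> j"
        have i: "i \<ge> 2" "x \<in> {u i..<v i}" using that(1) stp[of i] unfolding fam_def by (auto split: if_splits)
        have j: "j \<ge> 2" "x \<in> {u j..<v j}" using that(2) stp[of j] unfolding fam_def by (auto split: if_splits)
        have vu: "v i \<le> u j" if "i < j" for i j :: nat
        proof -
          have "real i * h \<le> (real j - 1) * h" using that h by (intro mult_right_mono) auto
          thus ?thesis unfolding u_def v_def using h by (intro s_mono) auto
        qed
        from ij have "i < j \<or> j < i" by linarith
        thus False using vu[of i j] vu[of j i] i j by auto
      qed
      show "ennreal (fam i x) \<le> ennreal (\<psi> x * q x * exp (- \<epsilon> * q x / g (\<psi> x + ln 2))) * indicator {0..} x" for i x
      proof (cases "i \<ge> 2 \<and> x \<in> {u i..<v i}")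
        case False
        hence "fam i x = 0" using stp[of i] unfolding fam_def by auto
        thus ?thesis by simp
      next
        case True
        hence i: "i \<ge> 2" and x: "u i \<le> x" "x < v i" by auto
        have x0: "x \<ge> 0" using uv[of i] i x by auto
        have psix: "(real i - 1) * h \<le> \<psi> x" using psi_mono[of "u i" x] psiu[of i] uv[of i] i x by auto
        have psix2: "\<psi> x \<le> real i * h" using psi_mono[of x "v i"] psiv[of i] x0 x by auto
        have qx: "q x \<le> q (s (real i * h))" using q_mono[of x "v i"] x0 x by (simp add: v_def)
        have qx0: "q x \<ge> 0" using q_nonneg x0 by simp
        have gx: "g ((real i + 1) * h) \<le> g (\<psi> x + ln 2)" using psix h2 by (intro g_le) (auto simp: algebra_simps)
        have "\<epsilon> * q x / g (\<psi> x + ln 2) \<le> \<epsilon> * q (s (real i * h)) / g ((real i + 1) * h)"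
        proof (rule frac_le)
          show "0 \<le> \<epsilon> * q (s (real i * h))" using e q_nonneg s_prop h by simp
          show "\<epsilon> * q x \<le> \<epsilon> * q (s (real i * h))" using e qx by simp
        qed (use gx g_pos in auto)
        hence EG: "G i \<le> exp (- \<epsilon> * q x / g (\<psi> x + ln 2))" unfolding G_def by simp
        have st: "stp i x \<le> q x" "0 \<le> stp i x" using stp[of i] i x by auto
        have "(real i - 1) * h * G i * stp i x \<le> \<psi> x * exp (- \<epsilon> * q x / g (\<psi> x + ln 2)) * q x"
          using psix EG st G[of i] i h psi_nonneg[OF x0] by (intro mult_mono) auto
        thus ?thesis using x0 i unfolding fam_def by (simp add: ennreal_leI algebra_simps)
      qed
      show "(\<integral>\<^sup>+ x. ennreal (\<psi> x * q x * exp (- \<epsilon> * q x / g (\<psi> x + ln 2))) * indicator {0..} x \<partial>lborel) < \<infinity>"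
        using c1 by simp
      show "0 \<le> c i" for i using G[of i] h unfolding c_def by simp
      show "ennreal (c i) \<le> (\<integral>\<^sup>+ x. ennreal (fam i x) \<partial>lborel)" for i
      proof (cases "i \<ge> 2")
        case False thus ?thesis by (simp add: c_def)
      next
        case True
        have K: "(real i - 1) * h * G i \<ge> 0" using True h G[of i] by simp
        have "(\<integral>\<^sup>+ x. ennreal (fam i x) \<partial>lborel) = (\<integral>\<^sup>+ x. ennreal ((real i - 1) * h * G i) * ennreal (stp i x) \<partial>lborel)"
          using True K stp[of i] unfolding fam_def by (intro nn_integral_cong) (simp add: ennreal_mult)
        also have "\<dots> = ennreal ((real i - 1) * h * G i) * (\<integral>\<^sup>+ x. ennreal (stp i x) \<partial>lborel)"
          using stp[of i] True by (intro nn_integral_cmult) auto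
        also have "\<dots> \<ge> ennreal ((real i - 1) * h * G i) * ennreal ((\<psi> (v i) - \<psi> (u i)) / 2)"
          using stp[of i] True by (intro mult_left_mono) auto
        finally have "ennreal ((real i - 1) * h * G i) * ennreal ((\<psi> (v i) - \<psi> (u i)) / 2) \<le> (\<integral>\<^sup>+ x. ennreal (fam i x) \<partial>lborel)" .
        moreover have "(\<psi> (v i) - \<psi> (u i)) / 2 = h / 2" using psiu[of i] psiv[of i] True by (simp add: algebra_simps)
        ultimately show ?thesis using True K h by (simp add: c_def ennreal_mult[symmetric])
      qed
    qed
    hence "summable (\<lambda>i. (6 / h^2) * c i)" by (rule summable_mult)
    thus ?thesis
    proof (rule summable_comparison_test'[where N = 2])
      fix i :: nat assume i: "i \<ge> 2"
      have "(real i + 1) * G i \<le> 3 * (real i - 1) * G i" using i G[of i] by (intro mult_right_mono) auto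
      also have "\<dots> = (6 / h^2) * c i" using i h by (simp add: c_def power2_eq_square field_simps)
      finally show "norm ((real i + 1) * G i) \<le> (6 / h^2) * c i" using G[of i] by simp
    qed
  qed
  define E where "E = (\<lambda>(k, n). if k \<ge> 1 \<and> n \<ge> 1 then {\<omega>\<in>space M. X k n \<omega> > aa (ln (real (k * n))) + \<epsilon>} else {})"
  have Esets: "E pr \<in> sets M" for pr
    using Xmeas by (cases pr) (auto simp: E_def)
  define F where "F i = {(k, n). k \<ge> 1 \<and> n \<ge> 1 \<and> exp (real i * h) \<le> real (k * n) \<and> real (k * n) < exp ((real i + 1) * h)}" for i :: nat
  have sumE: "summable (\<lambda>j. measure M (E (prod_decode j)))"
  proof (rule summable_pairs[where F = F])
    show "0 \<le> measure M (E pr)" for pr by simp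
    show "finite (F i)" for i
    proof (rule finite_subset)
      define N where "N = nat \<lceil>exp ((real i + 1) * h)\<rceil>"
      show "F i \<subseteq> {..N} \<times> {..N}"
      proof (rule subsetI)
        fix pr assume "pr \<in> F i"
        then obtain k n where prk: "pr = (k, n)" "(k, n) \<in> F i" by (cases pr) auto
        hence kn: "k \<ge> 1" "n \<ge> 1" "real (k * n) < exp ((real i + 1) * h)" by (auto simp: F_def)
        have "real k \<le> real (k * n)" "real n \<le> real (k * n)" using kn by auto
        hence "real k \<le> exp ((real i + 1) * h)" "real n \<le> exp ((real i + 1) * h)" using kn by linarith+
        hence "k \<le> N" "n \<le> N" unfolding N_def by (simp_all add: le_nat_iff ceiling_le_iff le_ceiling_iff)
        thus "pr \<in> {..N} \<times> {..N}" using prk by simp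
      qed
    qed simp
    show "disjoint_family F"
    proof (unfold disjoint_family_on_def, intro ballI impI)
      fix i j :: nat assume "i \<noteq> j"
      show "F i \<inter> F j = {}"
      proof (rule ccontr)
        assume "F i \<inter> F j \<noteq> {}"
        then obtain k n where "(k, n) \<in> F i" "(k, n) \<in> F j" by auto
        hence A: "exp (real i * h) \<le> real (k*n)" "real (k*n) < exp ((real j + 1) * h)"
           "exp (real j * h) \<le> real (k*n)" "real (k*n) < exp ((real i+1)*h)"
          by (auto simp: F_def simp del: of_nat_mult)
        hence "exp (real i * h) < exp ((real j + 1) * h)" "exp (real j * h) < exp ((real i + 1) * h)"
          by linarith+
        hence "real i * h < (real j + 1) * h" "real j * h < (real i + 1) * h" by (simp_all only: exp_less_cancel_iff)
        hence "real i < real j + 1" "real j < real i + 1" using h by (auto simp: mult_less_cancel_right)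
        thus False using \<open>i \<noteq> j\<close> by linarith
      qed
    qed
    show "\<exists>i. pr \<in> F i" if "measure M (E pr) \<noteq> 0" for pr
    proof -
      obtain k n where pr: "pr = (k, n)" by (cases pr)
      have kn: "k \<ge> 1" "n \<ge> 1" using that by (auto simp: E_def pr split: if_splits)
      define L where "L = ln (real (k * n))"
      have L0: "L \<ge> 0" using kn_ge1[OF kn] by (simp add: L_def)
      define i where "i = nat \<lfloor>L / h\<rfloor>"
      have "real i \<le> L / h" "L / h < real i + 1" using L0 h by (auto simp: i_def)
      hence "real i * h \<le> L" "L < (real i + 1) * h" using h by (auto simp: field_simps)
      hence "exp (real i * h) \<le> exp L" "exp L < exp ((real i + 1) * h)" by simp_all
      moreover have "exp L = real (k * n)" using kn_ge1[OF kn] by (simp add: L_def del: of_nat_mult)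
      ultimately have "exp (real i * h) \<le> real (k * n)" "real (k * n) < exp ((real i + 1) * h)" by simp_all
      thus ?thesis using kn by (auto simp: F_def pr)
    qed
    define B where "B i = exp h * (1 + h) * ((real i + 1) * G i)" for i
    have "summable B" unfolding B_def by (intro summable_mult sumG)
    thus "summable (\<lambda>i. \<Sum>pr\<in>F i. measure M (E pr))"
    proof (rule summable_comparison_test'[where N = 2])
      fix i :: nat assume i: "i \<ge> 2"
      have bd: "measure M (E pr) \<le> exp (- (real i * h)) * G i" if pr: "pr \<in> F i" for pr
      proof -
        obtain k n where prk: "pr = (k, n)" by (cases pr)
        have kn: "k \<ge> 1" "n \<ge> 1" "exp (real i * h) \<le> real (k * n)" "real (k * n) < exp ((real i + 1) * h)"
          using pr by (auto simp: F_def prk)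
        define L where "L = ln (real (k * n))"
        have eL: "exp L = real (k * n)" using kn_ge1[OF kn(1,2)] by (simp add: L_def del: of_nat_mult)
        have L: "real i * h \<le> L" "L < (real i + 1) * h"
          using kn(3,4) unfolding eL[symmetric] by simp_all
        have "2 * h \<le> real i * h" using i h by (intro mult_right_mono) auto
        hence Lpos: "L > 0" using L h by linarith
        have "measure M (E pr) \<le> exp (- L) * exp (- \<epsilon> * q (s L) / g L)"
          using tail_kn[OF kn(1,2) _ e] Lpos by (simp add: E_def prk L_def)
        also have "\<dots> \<le> exp (- (real i * h)) * G i"
        proof (rule mult_mono)
          show "exp (- L) \<le> exp (- (real i * h))" using L by simp
          have "\<epsilon> * q (s (real i * h)) / g ((real i + 1) * h) \<le> \<epsilon> * q (s L) / g L"
          proof (rule frac_le)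
            show "0 \<le> \<epsilon> * q (s L)" using e q_nonneg s_prop Lpos by simp
            have "q (s (real i * h)) \<le> q (s L)" using L h s_prop by (intro q_mono s_mono) auto
            thus "\<epsilon> * q (s (real i * h)) \<le> \<epsilon> * q (s L)" using e by simp
            show "g L \<le> g ((real i + 1) * h)" using L by (intro g_le) simp
          qed (use g_pos in auto)
          thus "exp (- \<epsilon> * q (s L) / g L) \<le> G i" unfolding G_def by simp
        qed auto
        finally show ?thesis .
      qed
      have "(\<Sum>pr\<in>F i. measure M (E pr)) \<le> (\<Sum>pr\<in>F i. exp (- (real i * h)) * G i)"
        by (rule sum_mono) (rule bd)
      also have "\<dots> = real (card (F i)) * (exp (- (real i * h)) * G i)" by simp
      also have "\<dots> \<le> (exp ((real i + 1) * h) * (1 + ln (exp ((real i + 1) * h)))) * (exp (- (real i * h)) * G i)"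
      proof (rule mult_right_mono)
        have "F i \<subseteq> {(k, n). k \<ge> 1 \<and> n \<ge> 1 \<and> real (k * n) < exp ((real i + 1) * h)}"
          by (auto simp: F_def)
        hence "card (F i) \<le> card {(k, n). k \<ge> 1 \<and> n \<ge> 1 \<and> real (k * n) < exp ((real i + 1) * h)}"
        proof (rule card_mono[rotated])
          define N where "N = nat \<lceil>exp ((real i + 1) * h)\<rceil>"
          have "{(k, n). k \<ge> 1 \<and> n \<ge> 1 \<and> real (k * n) < exp ((real i + 1) * h)} \<subseteq> {..N} \<times> {..N}"
          proof (rule subsetI)
            fix pr assume "pr \<in> {(k, n). k \<ge> 1 \<and> n \<ge> 1 \<and> real (k * n) < exp ((real i + 1) * h)}"
            then obtain k n where prk: "pr = (k, n)" and kn: "k \<ge> 1" "n \<ge> 1" "real (k * n) < exp ((real i + 1) * h)"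
              by (cases pr) auto
            have "real k \<le> real (k * n)" "real n \<le> real (k * n)" using kn by auto
            hence "real k \<le> exp ((real i + 1) * h)" "real n \<le> exp ((real i + 1) * h)" using kn by linarith+
            hence "k \<le> N" "n \<le> N" unfolding N_def by (simp_all add: le_nat_iff ceiling_le_iff le_ceiling_iff)
            thus "pr \<in> {..N} \<times> {..N}" using prk by simp
          qed
          thus "finite {(k, n). k \<ge> 1 \<and> n \<ge> 1 \<and> real (k * n) < exp ((real i + 1) * h)}"
            by (rule finite_subset) simp
        qed
        moreover have "real (card {(k, n). k \<ge> 1 \<and> n \<ge> 1 \<and> real (k * n) < exp ((real i + 1) * h)})
            \<le> exp ((real i + 1) * h) * (1 + ln (exp ((real i + 1) * h)))"
          using h by (intro count_pairs) simp
        ultimately show "real (card (F i)) \<le> exp ((real i + 1) * h) * (1 + ln (exp ((real i + 1) * h)))"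
          by linarith
        show "0 \<le> exp (- (real i * h)) * G i" using G[of i] by simp
      qed
      also have "\<dots> = exp h * (1 + (real i + 1) * h) * G i"
        by (simp add: exp_add[symmetric] algebra_simps)
      also have "\<dots> \<le> B i"
      proof -
        have "1 + (real i + 1) * h \<le> (1 + h) * (real i + 1)" using h by (simp add: algebra_simps)
        thus ?thesis unfolding B_def using G[of i] by (simp add: mult_left_mono mult_right_mono mult.assoc)
      qed
      finally have "(\<Sum>pr\<in>F i. measure M (E pr)) \<le> B i" .
      moreover have "(\<Sum>pr\<in>F i. measure M (E pr)) \<ge> 0" by (intro sum_nonneg) simp
      ultimately show "norm (\<Sum>pr\<in>F i. measure M (E pr)) \<le> B i" by simp
    qed
  qed
  have "AE \<omega> in M. eventually (\<lambda>j. \<omega> \<in> space M - E (prod_decode j)) sequentially"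
    by (rule borel_cantelli_AE1) (auto simp: Esets sumE emeasure_finite less_top[symmetric])
  thus ?thesis
  proof (rule AE_mp[OF _ AE_I2[OF impI]])
    fix \<omega> assume \<omega>: "\<omega> \<in> space M" and ev: "eventually (\<lambda>j. \<omega> \<in> space M - E (prod_decode j)) sequentially"
    then obtain J0 where J0: "\<And>j. j \<ge> J0 \<Longrightarrow> \<omega> \<notin> E (prod_decode j)" by (auto simp: eventually_sequentially)
    define Z where "Z = Suc (Max ((\<lambda>(k, n). k * n) ` prod_decode ` {..<J0}))"
    show "\<exists>Z. \<forall>k n. k \<ge> 1 \<longrightarrow> n \<ge> 1 \<longrightarrow> Z \<le> k * n \<longrightarrow> X k n \<omega> \<le> aa (ln (real (k * n))) + \<epsilon>"
    proof (intro exI[of _ Z] allI impI)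
      fix k n :: nat assume kn: "k \<ge> 1" "n \<ge> 1" "Z \<le> k * n"
      show "X k n \<omega> \<le> aa (ln (real (k * n))) + \<epsilon>"
      proof (rule ccontr)
        assume "\<not> ?thesis"
        hence inE: "\<omega> \<in> E (k, n)" using \<omega> kn by (auto simp: E_def)
        have "prod_encode (k, n) < J0"
          using J0[of "prod_encode (k, n)"] inE by (metis not_le prod_encode_inverse)
        hence "k * n \<in> (\<lambda>(k, n). k * n) ` prod_decode ` {..<J0}"
          by (intro image_eqI[of _ _ "(k, n)"] image_eqI[of _ _ "prod_encode (k, n)"]) auto
        hence "k * n \<le> Max ((\<lambda>(k, n). k * n) ` prod_decode ` {..<J0})" by (intro Max_ge) auto
        thus False using kn(3) by (simp add: Z_def)
      qed
    qed
  qed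
qed

end

locale th3L = th3 +
  fixes \<kappa> :: "real \<Rightarrow> real" and C :: real
  assumes indep: "prob_space.indep_vars M (\<lambda>_. borel) (\<lambda>(k, n). X k n) ({1..} \<times> {1..})"
  and \<kappa>_mono: "strict_mono \<kappa>" and C_pos: "C > 0"
  and cond2: "\<And>k n x. k \<ge> 1 \<Longrightarrow> n \<ge> 1 \<Longrightarrow> x > 0 \<Longrightarrow>
        measure M {\<omega> \<in> space M. X k n \<omega> / g (ln (real (k * n))) < x} \<le> exp (- C * exp (- \<kappa> x))"
begin

lemma \<kappa>_le: "x \<le> y \<Longrightarrow> \<kappa> x \<le> \<kappa> y"
  using strict_mono_mono[OF \<kappa>_mono] by (simp add: mono_def)

lemma single_bound:
  assumes k: "k \<ge> 1" and n: "n \<ge> 1" and t: "t > 0"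
  shows "measure M {\<omega> \<in> space M. X k n \<omega> < t} \<le> exp (- C * exp (- \<kappa> (t / g 0)))"
proof -
  define G where "G = g (ln (real (k * n)))"
  have G: "G > 0" "g 0 \<le> G" using g_pos kn_ge1[OF k n] g_le by (auto simp: G_def)
  have "{\<omega> \<in> space M. X k n \<omega> < t} = {\<omega> \<in> space M. X k n \<omega> / G < t / G}"
    using G by (auto simp: divide_less_cancel)
  hence "measure M {\<omega> \<in> space M. X k n \<omega> < t} \<le> exp (- C * exp (- \<kappa> (t / G)))"
    using cond2[OF k n, of "t / G"] t G by (simp add: G_def)
  also have "\<dots> \<le> exp (- C * exp (- \<kappa> (t / g 0)))"
  proof -
    have "t / G \<le> t / g 0" using t G g_pos[of 0] by (intro divide_left_mono) auto
    hence "\<kappa> (t / G) \<le> \<kappa> (t / g 0)" by (rule \<kappa>_le)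
    hence "exp (- \<kappa> (t / g 0)) \<le> exp (- \<kappa> (t / G))" by simp
    thus ?thesis using C_pos by simp
  qed
  finally show ?thesis .
qed

lemma rect_bound:
  assumes m: "m \<ge> 1" and j: "j \<ge> 1" and t: "t > 0"
  shows "measure M {\<omega> \<in> space M. \<forall>k\<in>{1..m}. \<forall>n\<in>{1..j}. X k n \<omega> < t}
     \<le> exp (- C * real (m * j) * exp (- \<kappa> (t / g 0)))"
proof -
  interpret prob_space M by (rule M)
  define R where "R = {1..m} \<times> {1..j}"
  define \<theta> where "\<theta> = exp (- C * exp (- \<kappa> (t / g 0)))"
  have R: "R \<noteq> {}" "finite R" "R \<subseteq> {1..} \<times> {1..}" using m j by (auto simp: R_def)
  have eq: "{\<omega> \<in> space M. \<forall>k\<in>{1..m}. \<forall>n\<in>{1..j}. X k n \<omega> < t}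
      = (\<Inter>i\<in>R. (\<lambda>(k, n). X k n) i -` {..<t} \<inter> space M)"
    using R(1) by (auto simp: R_def)
  have "measure M (\<Inter>i\<in>R. (\<lambda>(k, n). X k n) i -` {..<t} \<inter> space M)
      = (\<Prod>i\<in>R. measure M ((\<lambda>(k, n). X k n) i -` {..<t} \<inter> space M))"
    by (rule indep_varsD[OF indep R(1,2,3)]) simp
  also have "\<dots> \<le> (\<Prod>i\<in>R. \<theta>)"
  proof (rule prod_mono)
    fix i assume "i \<in> R"
    then obtain k n where i: "i = (k, n)" "k \<ge> 1" "n \<ge> 1" by (auto simp: R_def)
    have "(\<lambda>(k, n). X k n) i -` {..<t} \<inter> space M = {\<omega> \<in> space M. X k n \<omega> < t}" by (auto simp: i)
    thus "0 \<le> measure M ((\<lambda>(k, n). X k n) i -` {..<t} \<inter> space M) \<and> measure M ((\<lambda>(k, n). X k n) i -` {..<t} \<inter> space M) \<le> \<theta>"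
      using single_bound[OF i(2,3) t] by (simp add: \<theta>_def)
  qed
  also have "\<dots> = \<theta> ^ card R" by simp
  also have "card R = m * j" by (simp add: R_def)
  also have "\<theta> ^ (m * j) = exp (- C * real (m * j) * exp (- \<kappa> (t / g 0)))"
    unfolding \<theta>_def by (simp add: exp_of_nat_mult[symmetric] algebra_simps)
  finally show ?thesis using eq by simp
qed

lemma lower:
  assumes e: "\<epsilon> > 0" and A: "A > 0"
    and c4: "(\<integral>\<^sup>+ y\<in>{A..}. ennreal (exp (- (C * y / 2) *
            exp (- \<kappa> (g (ln y) / g 0 * s (ln y) - \<epsilon> / g (ln y))))) \<partial>lborel) < \<infinity>"
  shows "AE \<omega> in M. \<exists>Z. \<forall>m j. m \<ge> 1 \<longrightarrow> j \<ge> 1 \<longrightarrow> Z \<le> max m j \<longrightarrow>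
           (\<exists>k\<in>{1..m}. \<exists>n\<in>{1..j}. aa (ln (real (m * j))) - \<epsilon> \<le> X k n \<omega>)"
proof -
  interpret prob_space M by (rule M)
  define lam :: real where "lam = ln 2 / 4"
  have lam: "lam > 0" by (simp add: lam_def)
  define R where "R s = exp (real s * lam)" for s :: nat
  have Rpos: "R s > 0" for s by (simp add: R_def)
  have Radd: "R (s + k) = R s * R k" for s k by (simp add: R_def exp_add[symmetric] algebra_simps)
  have Rmono: "R a \<le> R b" if "a \<le> b" for a b using that lam by (simp add: R_def mult_right_mono)
  define m0 where "m0 a = nat \<lceil>R a\<rceil>" for a
  have m0: "real (m0 a) \<ge> R a" "m0 a \<ge> 1" for a
  proof -
    show "real (m0 a) \<ge> R a" using real_nat_ceiling_ge[of "R a"] by (simp add: m0_def)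
    have "1 \<le> \<lceil>R a\<rceil>" using Rpos[of a] by (simp add: one_le_ceiling)
    hence "nat 1 \<le> nat \<lceil>R a\<rceil>" by (rule nat_mono)
    thus "m0 a \<ge> 1" by (simp add: m0_def)
  qed
  define Lf where "Lf s = (real s + 2) * lam" for s :: nat
  define t where "t s = aa (Lf s) - \<epsilon>" for s
  define Fs where "Fs s = (if t s > 0 then exp (- C * R s * exp (- \<kappa> (t s / g 0))) else 1)" for s
  have Fs: "0 \<le> Fs s" "Fs s \<le> 1" for s using C_pos Rpos[of s] by (auto simp: Fs_def)
  define Bs where "Bs = (\<lambda>(a, b). {\<omega> \<in> space M. \<forall>k\<in>{1..m0 a}. \<forall>n\<in>{1..m0 b}. X k n \<omega> < t (a + b)})"
  have Bsets: "Bs pr \<in> sets M" for pr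
  proof -
    obtain a b where pr: "pr = (a, b)" by (cases pr)
    have "Bs pr = space M \<inter> (\<Inter>k\<in>{1..m0 a}. \<Inter>n\<in>{1..m0 b}. {\<omega> \<in> space M. X k n \<omega> < t (a + b)})"
      by (auto simp: Bs_def pr)
    also have "\<dots> \<in> sets M" using Xmeas m0(2)[of a] m0(2)[of b] by (intro sets.Int sets.top sets.finite_INT) auto
    finally show ?thesis .
  qed
  have PB: "measure M (Bs (a, b)) \<le> Fs (a + b)" for a b
  proof (cases "t (a + b) > 0")
    case False thus ?thesis by (simp add: Fs_def)
  next
    case True
    have "measure M (Bs (a, b)) \<le> exp (- C * real (m0 a * m0 b) * exp (- \<kappa> (t (a + b) / g 0)))"
      unfolding Bs_def using rect_bound[OF m0(2) m0(2) True] by simp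
    also have "\<dots> \<le> exp (- C * R (a + b) * exp (- \<kappa> (t (a + b) / g 0)))"
    proof -
      have "R a * R b \<le> real (m0 a) * real (m0 b)"
        by (rule mult_mono) (use m0 Rpos[THEN less_imp_le] in auto)
      hence "R (a + b) \<le> real (m0 a * m0 b)" by (simp add: Radd)
      hence "C * R (a + b) * exp (- \<kappa> (t (a + b) / g 0)) \<le> C * real (m0 a * m0 b) * exp (- \<kappa> (t (a + b) / g 0))"
        using C_pos by (intro mult_right_mono mult_left_mono) auto
      thus ?thesis by simp
    qed
    finally show ?thesis using True by (simp add: Fs_def)
  qed
  obtain L0 where L0: "L0 \<ge> 0" "s L0 \<ge> (\<epsilon> + 1) / g 0" using s_unbounded by blast
  define s0 :: nat where "s0 = nat \<lceil>L0 / lam\<rceil> + nat \<lceil>ln (max A 1) / lam\<rceil>"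
  have s0t: "t w > 0" if "w \<ge> s0" for w
  proof -
    have "L0 / lam \<le> real (nat \<lceil>L0 / lam\<rceil>)" by (rule real_nat_ceiling_ge)
    moreover have "real (nat \<lceil>L0 / lam\<rceil>) \<le> real w" using that unfolding s0_def of_nat_le_iff by linarith
    ultimately have "L0 / lam \<le> real w" by linarith
    hence "L0 \<le> real w * lam" using lam by (simp add: pos_divide_le_eq)
    hence "L0 \<le> Lf w" using lam by (simp add: Lf_def algebra_simps)
    have "g 0 * s L0 \<le> g 0 * s (Lf w)" using s_mono[of L0 "Lf w"] L0 \<open>L0 \<le> Lf w\<close> g_pos[of 0]
      by (intro mult_left_mono) auto
    moreover have "g 0 * s (Lf w) \<le> aa (Lf w)" using aa_ge[of "Lf w"] L0 \<open>L0 \<le> Lf w\<close> by simp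
    ultimately have "aa (Lf w) \<ge> g 0 * s L0" by linarith
    moreover have "g 0 * s L0 \<ge> \<epsilon> + 1" using L0(2) g_pos[of 0] by (simp add: field_simps)
    ultimately show ?thesis by (simp add: t_def)
  qed
  have s0A: "R (w + 2) \<ge> max A 1" if "w \<ge> s0" for w
  proof -
    have "ln (max A 1) / lam \<le> real (nat \<lceil>ln (max A 1) / lam\<rceil>)" by (rule real_nat_ceiling_ge)
    moreover have "real (nat \<lceil>ln (max A 1) / lam\<rceil>) \<le> real w" using that unfolding s0_def of_nat_le_iff by linarith
    ultimately have "ln (max A 1) / lam \<le> real w" by linarith
    hence "ln (max A 1) \<le> real w * lam" using lam by (simp add: pos_divide_le_eq)
    hence "ln (max A 1) \<le> real (w + 2) * lam" using lam by (simp add: algebra_simps)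
    hence "exp (ln (max A 1)) \<le> exp (real (w + 2) * lam)" by (simp only: exp_le_cancel_iff)
    moreover have "exp (ln (max A 1)) = max A 1" by simp
    ultimately show ?thesis unfolding R_def by linarith
  qed
  have sumF: "summable (\<lambda>s. (real s + 1) * Fs s)"
  proof -
    define fam where "fam s y = (if s \<ge> s0 then Fs s * indicator {R (s + 2)..<R (s + 3)} y else 0)" for s y
    define c where "c s = (if s \<ge> s0 then Fs s * (R (s + 3) - R (s + 2)) else 0)" for s
    have "summable c"
    proof (rule summable_from_integral[where f = fam and I = "\<lambda>y. ennreal (exp (- (C * y / 2) *
            exp (- \<kappa> (g (ln y) / g 0 * s (ln y) - \<epsilon> / g (ln y))))) * indicator {A..} y"])
      show "fam i \<in> borel_measurable lborel" for i unfolding fam_def by measurable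
      show "0 \<le> fam i x" for i x using Fs[of i] unfolding fam_def by auto
      show "i = j" if "fam i x \<noteq> 0" "fam j x \<noteq> 0" for i j x
      proof (rule ccontr)
        assume ij: "i \<noteq> j"
        have i: "R (i + 2) \<le> x" "x < R (i + 3)" using that(1) unfolding fam_def by (auto split: if_splits simp: indicator_def)
        have j: "R (j + 2) \<le> x" "x < R (j + 3)" using that(2) unfolding fam_def by (auto split: if_splits simp: indicator_def)
        from ij have "i < j \<or> j < i" by linarith
        thus False using Rmono[of "i + 3" "j + 2"] Rmono[of "j + 3" "i + 2"] i j by auto
      qed
      show "ennreal (fam i y) \<le> ennreal (exp (- (C * y / 2) *
            exp (- \<kappa> (g (ln y) / g 0 * s (ln y) - \<epsilon> / g (ln y))))) * indicator {A..} y" for i y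
      proof (cases "i \<ge> s0 \<and> y \<in> {R (i + 2)..<R (i + 3)}")
        case False thus ?thesis unfolding fam_def by auto
      next
        case True
        hence i: "i \<ge> s0" and y: "R (i + 2) \<le> y" "y < R (i + 3)" by auto
        have yA: "y \<ge> A" "y \<ge> 1" using s0A[OF i] y by auto
        have tpos: "t i > 0" using s0t[OF i] .
        have lny: "ln y \<ge> Lf i"
        proof -
          have "exp (Lf i) \<le> y" using y by (simp add: R_def Lf_def algebra_simps)
          thus ?thesis using yA by (subst ln_ge_iff) auto
        qed
        have Lf0: "Lf i \<ge> 0" using lam by (simp add: Lf_def)
        have ge1: "g (Lf i) \<le> g (ln y)" "g 0 \<le> g (ln y)" using lny Lf0 by (auto intro: g_le)
        have "t i / g 0 \<le> g (ln y) / g 0 * s (ln y) - \<epsilon> / g (ln y)"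
        proof -
          have "aa (Lf i) \<le> g (ln y) * s (ln y)"
            unfolding aa_def using ge1 s_mono[OF Lf0 lny] s_prop[OF Lf0] g_pos[of "ln y", THEN less_imp_le]
            by (intro mult_mono) auto
          hence "t i / g 0 \<le> (g (ln y) * s (ln y) - \<epsilon>) / g 0"
            using g_pos[of 0] by (simp add: t_def divide_right_mono)
          also have "\<dots> = g (ln y) / g 0 * s (ln y) - \<epsilon> / g 0" by (simp add: diff_divide_distrib)
          also have "\<dots> \<le> g (ln y) / g 0 * s (ln y) - \<epsilon> / g (ln y)"
          proof -
            have "\<epsilon> / g (ln y) \<le> \<epsilon> / g 0" by (rule divide_left_mono) (auto simp: ge1 e less_imp_le intro!: mult_pos_pos g_pos)
            thus ?thesis by linarith
          qed
          finally show ?thesis .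
        qed
        from \<kappa>_le[OF this] have kap: "exp (- \<kappa> (g (ln y) / g 0 * s (ln y) - \<epsilon> / g (ln y))) \<le> exp (- \<kappa> (t i / g 0))"
          by simp
        have y2: "y / 2 \<le> R i"
        proof -
          have "R (i + 3) = R i * R 3" by (rule Radd)
          moreover have "R 3 \<le> 2"
          proof -
            have "3 * lam \<le> ln 2" using ln_ge_zero[of 2] by (simp add: lam_def)
            hence "exp (3 * lam) \<le> exp (ln 2)" by (simp only: exp_le_cancel_iff)
            hence "exp (3 * lam) \<le> 2" by simp
            thus ?thesis by (simp add: R_def)
          qed
          moreover have "R i * R 3 \<le> R i * 2" by (rule mult_left_mono) (use Rpos[THEN less_imp_le] calculation in auto)
          ultimately have "R (i + 3) \<le> 2 * R i" by simp
          thus ?thesis using y by simp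
        qed
        have "(C * y / 2) * exp (- \<kappa> (g (ln y) / g 0 * s (ln y) - \<epsilon> / g (ln y))) \<le> C * R i * exp (- \<kappa> (t i / g 0))"
        proof -
          have "C * y / 2 \<le> C * R i" using y2 C_pos by (simp add: field_simps)
          thus ?thesis using kap C_pos yA Rpos[of i] by (intro mult_mono) auto
        qed
        hence "Fs i \<le> exp (- (C * y / 2) * exp (- \<kappa> (g (ln y) / g 0 * s (ln y) - \<epsilon> / g (ln y))))"
          using tpos by (simp add: Fs_def)
        thus ?thesis using i y yA unfolding fam_def by (simp add: ennreal_leI)
      qed
      show "(\<integral>\<^sup>+ y. ennreal (exp (- (C * y / 2) * exp (- \<kappa> (g (ln y) / g 0 * s (ln y) - \<epsilon> / g (ln y))))) * indicator {A..} y \<partial>lborel) < \<infinity>"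
        using c4 by simp
      show "0 \<le> c i" for i using Fs[of i] Rmono[of "i + 2" "i + 3"] unfolding c_def by auto
      show "ennreal (c i) \<le> (\<integral>\<^sup>+ x. ennreal (fam i x) \<partial>lborel)" for i
      proof (cases "i \<ge> s0")
        case False thus ?thesis by (simp add: c_def fam_def)
      next
        case True
        have le: "R (i + 2) \<le> R (i + 3)" by (rule Rmono) simp
        have "(\<integral>\<^sup>+ x. ennreal (fam i x) \<partial>lborel) = (\<integral>\<^sup>+ x. ennreal (Fs i) * indicator {R (i + 2)..<R (i + 3)} x \<partial>lborel)"
          using True Fs[of i] unfolding fam_def by (intro nn_integral_cong) (simp add: indicator_def)
        also have "\<dots> = ennreal (Fs i) * ennreal (R (i + 3) - R (i + 2))"
          using le by (simp add: nn_integral_cmult_indicator)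
        also have "\<dots> = ennreal (c i)" using True Fs[of i] le by (simp add: c_def ennreal_mult[symmetric])
        finally show ?thesis by simp
      qed
    qed
    define lq where "lq = exp lam - 1"
    have lq: "lq > 0" "lq \<le> 1"
    proof -
      show "lq > 0" using lam by (simp add: lq_def)
      have "lam \<le> ln 2" using ln_ge_zero[of 2] by (simp add: lam_def)
      hence "exp lam \<le> exp (ln 2)" by (simp only: exp_le_cancel_iff)
      hence "exp lam \<le> 2" by simp
      thus "lq \<le> 1" by (simp add: lq_def)
    qed
    have "summable (\<lambda>s. (1 / lq^2) * c s)" using \<open>summable c\<close> by (rule summable_mult)
    thus ?thesis
    proof (rule summable_comparison_test'[where N = s0])
      fix i assume i: "i \<ge> s0"
      have Ri: "R i = (1 + lq) ^ i" unfolding R_def lq_def by (simp add: exp_of_nat_mult)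
      have "1 + real i * lq \<le> R i" unfolding Ri using lq by (intro Bernoulli_inequality) auto
      moreover have "(real i + 1) * lq = real i * lq + lq" by (simp add: algebra_simps)
      ultimately have "(real i + 1) * lq \<le> R i" using lq by linarith
      moreover have "R i * lq \<le> R (i + 3) - R (i + 2)"
      proof -
        have e3: "R (i + 3) = R (i + 2) * exp lam" by (simp add: R_def exp_add[symmetric] algebra_simps)
        have "R (i + 3) - R (i + 2) = R i * R 2 * lq"
          using e3 Radd[of i 2] by (simp add: lq_def algebra_simps)
        moreover have "R 2 \<ge> 1" using lam by (simp add: R_def)
        moreover have "R i * 1 \<le> R i * R 2" by (rule mult_left_mono) (use Rpos[THEN less_imp_le] calculation in auto)
        hence "R i * 1 * lq \<le> R i * R 2 * lq" by (rule mult_right_mono) (use lq in auto)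
        ultimately show ?thesis by simp
      qed
      moreover have "(real i + 1) * lq * lq \<le> R i * lq"
        using calculation(1) lq by (intro mult_right_mono) auto
      ultimately have "(real i + 1) * lq * lq \<le> R (i + 3) - R (i + 2)" by linarith
      hence "(real i + 1) \<le> (R (i + 3) - R (i + 2)) / lq^2"
        using lq by (simp add: field_simps power2_eq_square)
      hence "(real i + 1) * Fs i \<le> (R (i + 3) - R (i + 2)) / lq^2 * Fs i"
        using Fs[of i] by (intro mult_right_mono) auto
      also have "\<dots> = (1 / lq^2) * c i" using i by (simp add: c_def)
      finally show "norm ((real i + 1) * Fs i) \<le> (1 / lq^2) * c i" using Fs[of i] by simp
    qed
  qed
  define Fset where "Fset s = {(a, b). a + b = s}" for s :: nat
  have sumB: "summable (\<lambda>j. measure M (Bs (prod_decode j)))"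
  proof (rule summable_pairs[where F = Fset])
    show "0 \<le> measure M (Bs pr)" for pr by simp
    have Fimg: "Fset s = (\<lambda>a. (a, s - a)) ` {..s}" for s by (auto simp: Fset_def image_def)
    show "finite (Fset i)" for i unfolding Fimg by simp
    show "disjoint_family Fset" by (auto simp: disjoint_family_on_def Fset_def)
    show "\<exists>i. pr \<in> Fset i" for pr by (cases pr) (auto simp: Fset_def)
    show "summable (\<lambda>i. \<Sum>pr\<in>Fset i. measure M (Bs pr))"
    proof (rule summable_comparison_test'[OF sumF, where N = 0])
      fix i :: nat
      have "(\<Sum>pr\<in>Fset i. measure M (Bs pr)) \<le> (\<Sum>pr\<in>Fset i. Fs i)"
        by (rule sum_mono) (auto simp: Fset_def PB)
      also have "\<dots> = real (card (Fset i)) * Fs i" by simp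
      also have "\<dots> \<le> (real i + 1) * Fs i"
      proof (rule mult_right_mono)
        have "card (Fset i) \<le> card {..i}" unfolding Fimg by (rule card_image_le) simp
        thus "real (card (Fset i)) \<le> real i + 1" by simp
      qed (use Fs in auto)
      finally have "(\<Sum>pr\<in>Fset i. measure M (Bs pr)) \<le> (real i + 1) * Fs i" .
      moreover have "0 \<le> (\<Sum>pr\<in>Fset i. measure M (Bs pr))" by (intro sum_nonneg) simp
      ultimately show "norm (\<Sum>pr\<in>Fset i. measure M (Bs pr)) \<le> (real i + 1) * Fs i" by simp
    qed
  qed
  have "AE \<omega> in M. eventually (\<lambda>j. \<omega> \<in> space M - Bs (prod_decode j)) sequentially"
    by (rule borel_cantelli_AE1) (auto simp: Bsets sumB emeasure_finite less_top[symmetric])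
  thus ?thesis
  proof (rule AE_mp[OF _ AE_I2[OF impI]])
    fix \<omega> assume \<omega>: "\<omega> \<in> space M" and ev: "eventually (\<lambda>j. \<omega> \<in> space M - Bs (prod_decode j)) sequentially"
    then obtain J0 where J0: "\<And>j. j \<ge> J0 \<Longrightarrow> \<omega> \<notin> Bs (prod_decode j)" by (auto simp: eventually_sequentially)
    define D where "D = prod_decode ` {..<J0}"
    define Z0 where "Z0 = Suc (Max (fst ` D \<union> snd ` D))"
    have notB: "\<omega> \<notin> Bs (a, b)" if "Z0 \<le> a \<or> Z0 \<le> b" for a b
    proof
      assume inB: "\<omega> \<in> Bs (a, b)"
      have "prod_encode (a, b) < J0"
        using J0[of "prod_encode (a, b)"] inB by (metis not_le prod_encode_inverse)
      hence "(a, b) \<in> D" unfolding D_def by (intro image_eqI[of _ _ "prod_encode (a, b)"]) auto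
      hence ab: "a \<in> fst ` D \<union> snd ` D" "b \<in> fst ` D \<union> snd ` D" by force+
      have finD: "finite (fst ` D \<union> snd ` D)" by (simp add: D_def)
      have "a \<le> Max (fst ` D \<union> snd ` D)" "b \<le> Max (fst ` D \<union> snd ` D)"
        using Max_ge[OF finD ab(1)] Max_ge[OF finD ab(2)] by auto
      thus False using that by (auto simp: Z0_def)
    qed
    define Z where "Z = nat \<lceil>R Z0\<rceil>"
    show "\<exists>Z. \<forall>m j. m \<ge> 1 \<longrightarrow> j \<ge> 1 \<longrightarrow> Z \<le> max m j \<longrightarrow>
           (\<exists>k\<in>{1..m}. \<exists>n\<in>{1..j}. aa (ln (real (m * j))) - \<epsilon> \<le> X k n \<omega>)"
    proof (intro exI[of _ Z] allI impI)
      fix m j :: nat assume mj: "m \<ge> 1" "j \<ge> 1" "Z \<le> max m j"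
      have blk: "R (nat \<lfloor>ln (real x) / lam\<rfloor>) \<le> real x \<and> real x < R (Suc (nat \<lfloor>ln (real x) / lam\<rfloor>))"
        if "x \<ge> 1" for x :: nat
      proof -
        define a where "a = nat \<lfloor>ln (real x) / lam\<rfloor>"
        have l0: "ln (real x) \<ge> 0" using that by simp
        have "real a \<le> ln (real x) / lam" "ln (real x) / lam < real a + 1" using l0 lam by (auto simp: a_def)
        hence "real a * lam \<le> ln (real x)" "ln (real x) < (real a + 1) * lam" using lam by (auto simp: field_simps)
        hence "exp (real a * lam) \<le> exp (ln (real x))" "exp (ln (real x)) < exp ((real a + 1) * lam)" by simp_all
        moreover have "exp (ln (real x)) = real x" using that by simp
        ultimately show ?thesis by (simp add: R_def a_def[symmetric] add.commute)
      qed
      define a where "a = nat \<lfloor>ln (real m) / lam\<rfloor>"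
      define b where "b = nat \<lfloor>ln (real j) / lam\<rfloor>"
      have ba: "R a \<le> real m" "real m < R (Suc a)" using blk[OF mj(1)] by (simp_all add: a_def)
      have bb: "R b \<le> real j" "real j < R (Suc b)" using blk[OF mj(2)] by (simp_all add: b_def)
      have Z: "R Z0 \<le> real Z" by (simp add: Z_def real_nat_ceiling_ge)
      have "Z0 \<le> a \<or> Z0 \<le> b"
      proof (rule ccontr)
        assume "\<not> (Z0 \<le> a \<or> Z0 \<le> b)"
        hence "Suc a \<le> Z0" "Suc b \<le> Z0" by auto
        hence "R (Suc a) \<le> R Z0" "R (Suc b) \<le> R Z0" by (auto intro: Rmono)
        hence "real m < real Z" "real j < real Z" using ba bb Z by linarith+
        thus False using mj(3) by (simp add: max_def split: if_splits)
      qed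
      hence nb: "\<omega> \<notin> Bs (a, b)" by (rule notB)
      then obtain k n where kn: "k \<in> {1..m0 a}" "n \<in> {1..m0 b}" "X k n \<omega> \<ge> t (a + b)"
        using \<omega> unfolding Bs_def by (auto simp: not_less)
      have "m0 a \<le> m" using ba by (simp add: m0_def nat_le_iff ceiling_le_iff)
      moreover have "m0 b \<le> j" using bb by (simp add: m0_def nat_le_iff ceiling_le_iff)
      moreover have "aa (ln (real (m * j))) \<le> aa (Lf (a + b))"
      proof (rule aa_mono)
        show "0 \<le> ln (real (m * j))" using kn_ge1[OF mj(1,2)] by simp
        have "ln (real (m * j)) = ln (real m) + ln (real j)" using mj by (simp add: ln_mult)
        also have "\<dots> < (real a + 1) * lam + (real b + 1) * lam"
        proof -
          have "ln (real m) < ln (R (Suc a))" using ba(2) mj(1) Rpos by (subst ln_less_cancel_iff) auto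
          moreover have "ln (real j) < ln (R (Suc b))" using bb(2) mj(2) Rpos by (subst ln_less_cancel_iff) auto
          moreover have "ln (R (Suc a)) = (real a + 1) * lam" "ln (R (Suc b)) = (real b + 1) * lam"
            by (simp_all add: R_def)
          ultimately show ?thesis by linarith
        qed
        also have "\<dots> = Lf (a + b)" by (simp add: Lf_def algebra_simps)
        finally show "ln (real (m * j)) \<le> Lf (a + b)" by simp
      qed
      ultimately show "\<exists>k\<in>{1..m}. \<exists>n\<in>{1..j}. aa (ln (real (m * j))) - \<epsilon> \<le> X k n \<omega>"
        using kn by (intro bexI[of _ k] bexI[of _ n]) (auto simp: t_def)
    qed
  qed
qed

end

context th3L begin

lemma main:
  assumes c1: "\<exists>\<epsilon>\<^sub>0>0. \<forall>\<epsilon>. 0 < \<epsilon> \<and> \<epsilon> \<le> \<epsilon>\<^sub>0 \<longrightarrow>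
        (\<integral>\<^sup>+ x\<in>{0..}. ennreal (\<psi> x * q x * exp (- \<epsilon> * q x / g (\<psi> x + ln 2))) \<partial>lborel) < \<infinity>"
    and c4: "\<exists>A>0. \<exists>\<epsilon>\<^sub>1>0. \<forall>\<epsilon>. 0 < \<epsilon> \<and> \<epsilon> \<le> \<epsilon>\<^sub>1 \<longrightarrow>
        (\<integral>\<^sup>+ y\<in>{A..}. ennreal (exp (- (C * y / 2) *
            exp (- \<kappa> (g (ln y) / g 0 * s (ln y) - \<epsilon> / g (ln y))))) \<partial>lborel) < \<infinity>"
  shows "AE \<omega> in M. double_lim
           (\<lambda>m j. Max {X k n \<omega> | k n. k \<in> {1..m} \<and> n \<in> {1..j}}
                  - g (ln (real (m * j))) * s (ln (real (m * j)))) 0"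
proof -
  interpret prob_space M by (rule M)
  obtain \<epsilon>0 where e0: "\<epsilon>0 > 0" "\<And>\<epsilon>. 0 < \<epsilon> \<Longrightarrow> \<epsilon> \<le> \<epsilon>0 \<Longrightarrow>
        (\<integral>\<^sup>+ x\<in>{0..}. ennreal (\<psi> x * q x * exp (- \<epsilon> * q x / g (\<psi> x + ln 2))) \<partial>lborel) < \<infinity>"
    using c1 by blast
  obtain A \<epsilon>1 where e1: "A > 0" "\<epsilon>1 > 0" "\<And>\<epsilon>. 0 < \<epsilon> \<Longrightarrow> \<epsilon> \<le> \<epsilon>1 \<Longrightarrow>
        (\<integral>\<^sup>+ y\<in>{A..}. ennreal (exp (- (C * y / 2) *
            exp (- \<kappa> (g (ln y) / g 0 * s (ln y) - \<epsilon> / g (ln y))))) \<partial>lborel) < \<infinity>"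
    using c4 by blast
  define \<delta> where "\<delta> i = min \<epsilon>0 \<epsilon>1 / (real i + 2)" for i :: nat
  have \<delta>: "\<delta> i > 0" "\<delta> i \<le> \<epsilon>0" "\<delta> i \<le> \<epsilon>1" for i
  proof -
    have m: "min \<epsilon>0 \<epsilon>1 > 0" using e0 e1 by simp
    show "\<delta> i > 0" using m by (simp add: \<delta>_def)
    have "min \<epsilon>0 \<epsilon>1 / (real i + 2) \<le> min \<epsilon>0 \<epsilon>1 / 1" by (rule divide_left_mono) (use m in auto)
    hence "\<delta> i \<le> min \<epsilon>0 \<epsilon>1" unfolding \<delta>_def by simp
    thus "\<delta> i \<le> \<epsilon>0" "\<delta> i \<le> \<epsilon>1" by auto
  qed
  have "AE \<omega> in M. \<forall>i. (\<exists>Z. \<forall>k n. k \<ge> 1 \<longrightarrow> n \<ge> 1 \<longrightarrow> Z \<le> k * n \<longrightarrow> X k n \<omega> \<le> aa (ln (real (k * n))) + \<delta> i)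
      \<and> (\<exists>Z. \<forall>m j. m \<ge> 1 \<longrightarrow> j \<ge> 1 \<longrightarrow> Z \<le> max m j \<longrightarrow>
           (\<exists>k\<in>{1..m}. \<exists>n\<in>{1..j}. aa (ln (real (m * j))) - \<delta> i \<le> X k n \<omega>))"
  proof (subst AE_all_countable, intro allI AE_conjI)
    fix i
    show "AE \<omega> in M. \<exists>Z. \<forall>k n. k \<ge> 1 \<longrightarrow> n \<ge> 1 \<longrightarrow> Z \<le> k * n \<longrightarrow> X k n \<omega> \<le> aa (ln (real (k * n))) + \<delta> i"
      by (rule upper) (use \<delta> e0 in auto)
    show "AE \<omega> in M. \<exists>Z. \<forall>m j. m \<ge> 1 \<longrightarrow> j \<ge> 1 \<longrightarrow> Z \<le> max m j \<longrightarrow>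
           (\<exists>k\<in>{1..m}. \<exists>n\<in>{1..j}. aa (ln (real (m * j))) - \<delta> i \<le> X k n \<omega>)"
      by (rule lower[OF _ e1(1)]) (use \<delta> e1 in auto)
  qed
  thus ?thesis
  proof (rule AE_mp[OF _ AE_I2[OF impI]])
    fix \<omega> assume H: "\<forall>i. (\<exists>Z. \<forall>k n. k \<ge> 1 \<longrightarrow> n \<ge> 1 \<longrightarrow> Z \<le> k * n \<longrightarrow> X k n \<omega> \<le> aa (ln (real (k * n))) + \<delta> i)
      \<and> (\<exists>Z. \<forall>m j. m \<ge> 1 \<longrightarrow> j \<ge> 1 \<longrightarrow> Z \<le> max m j \<longrightarrow>
           (\<exists>k\<in>{1..m}. \<exists>n\<in>{1..j}. aa (ln (real (m * j))) - \<delta> i \<le> X k n \<omega>))"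
    show "double_lim (\<lambda>m j. Max {X k n \<omega> | k n. k \<in> {1..m} \<and> n \<in> {1..j}}
                  - g (ln (real (m * j))) * s (ln (real (m * j)))) 0"
      unfolding double_lim_def
    proof (intro allI impI)
      fix e :: real assume e: "e > 0"
      obtain i :: nat where i: "min \<epsilon>0 \<epsilon>1 / e < real i" using reals_Archimedean2 by blast
      have "\<delta> i < e"
      proof -
        have m: "min \<epsilon>0 \<epsilon>1 > 0" using e0 e1 by simp
        have "min \<epsilon>0 \<epsilon>1 < e * real i" using i e by (simp add: field_simps)
        also have "\<dots> \<le> e * (real i + 2)" using e by simp
        finally show ?thesis unfolding \<delta>_def by (simp add: divide_less_eq mult.commute)
      qed
      define \<epsilon> where "\<epsilon> = \<delta> i"
      have \<epsilon>: "\<epsilon> > 0" "\<epsilon> < e" using \<delta>[of i] \<open>\<delta> i < e\<close> by (auto simp: \<epsilon>_def)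
      obtain Zu where Zu: "\<And>k n. k \<ge> 1 \<Longrightarrow> n \<ge> 1 \<Longrightarrow> Zu \<le> k * n \<Longrightarrow> X k n \<omega> \<le> aa (ln (real (k * n))) + \<epsilon>"
        using H unfolding \<epsilon>_def by blast
      obtain Zl where Zl: "\<And>m j. m \<ge> 1 \<Longrightarrow> j \<ge> 1 \<Longrightarrow> Zl \<le> max m j \<Longrightarrow>
           (\<exists>k\<in>{1..m}. \<exists>n\<in>{1..j}. aa (ln (real (m * j))) - \<epsilon> \<le> X k n \<omega>)"
        using H unfolding \<epsilon>_def by blast
      define B where "B = Max ((\<lambda>(k, n). X k n \<omega>) ` ({0..Zu} \<times> {0..Zu}))"
      have B: "X k n \<omega> \<le> B" if "k \<le> Zu" "n \<le> Zu" for k n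
        unfolding B_def using that by (intro Max_ge) auto
      obtain L1 where L1: "L1 \<ge> 0" "s L1 \<ge> \<bar>B\<bar> / g 0" using s_unbounded by blast
      define N where "N = max Zl (nat \<lceil>exp L1\<rceil>)"
      show "\<exists>N. \<forall>m j. 1 \<le> m \<longrightarrow> 1 \<le> j \<longrightarrow> N \<le> max m j \<longrightarrow>
          \<bar>Max {X k n \<omega> | k n. k \<in> {1..m} \<and> n \<in> {1..j}} - g (ln (real (m * j))) * s (ln (real (m * j))) - 0\<bar> < e"
      proof (intro exI[of _ N] allI impI)
        fix m j :: nat assume mj: "1 \<le> m" "1 \<le> j" "N \<le> max m j"
        define S where "S = {X k n \<omega> | k n. k \<in> {1..m} \<and> n \<in> {1..j}}"
        have S: "S = (\<lambda>(k, n). X k n \<omega>) ` ({1..m} \<times> {1..j})" unfolding S_def by auto blast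
        have finS: "finite S" "S \<noteq> {}" using mj by (auto simp: S)
        define a where "a = aa (ln (real (m * j)))"
        have aeq: "g (ln (real (m * j))) * s (ln (real (m * j))) = a" by (simp add: a_def aa_def)
        have L0: "ln (real (m * j)) \<ge> 0" using kn_ge1[OF mj(1,2)] by simp
        have aB: "B \<le> a"
        proof -
          have "nat \<lceil>exp L1\<rceil> \<le> max m j" using mj(3) unfolding N_def by simp
          hence "real (nat \<lceil>exp L1\<rceil>) \<le> real (max m j)" by (rule of_nat_mono)
          hence "exp L1 \<le> real (max m j)" using real_nat_ceiling_ge[of "exp L1"] by linarith
          also have "\<dots> \<le> real (m * j)" using mj by (auto simp: max_def)
          finally have "exp L1 \<le> real (m * j)" .
          hence "L1 \<le> ln (real (m * j))" using kn_ge1[OF mj(1,2)] by (subst ln_ge_iff) auto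
          hence "s L1 \<le> s (ln (real (m * j)))" using L1 by (intro s_mono) auto
          hence "\<bar>B\<bar> / g 0 \<le> s (ln (real (m * j)))" using L1 by linarith
          hence "\<bar>B\<bar> \<le> g 0 * s (ln (real (m * j)))" using g_pos[of 0] by (simp add: divide_le_eq mult.commute)
          also have "\<dots> \<le> a" unfolding a_def by (rule aa_ge[OF L0])
          finally show ?thesis by simp
        qed
        have up: "Max S \<le> a + \<epsilon>"
        proof (subst Max_le_iff[OF finS], intro ballI)
          fix x assume "x \<in> S"
          then obtain k n where kn: "k \<in> {1..m}" "n \<in> {1..j}" "x = X k n \<omega>" by (auto simp: S_def)
          show "x \<le> a + \<epsilon>"
          proof (cases "Zu \<le> k * n")
            case True
            have "X k n \<omega> \<le> aa (ln (real (k * n))) + \<epsilon>" using Zu[OF _ _ True] kn by auto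
            also have "aa (ln (real (k * n))) \<le> a" unfolding a_def
            proof (rule aa_mono)
              show "0 \<le> ln (real (k * n))" using kn_ge1[of k n] kn by auto
              have "k * n \<le> m * j" using kn by (intro mult_le_mono) auto
              hence "real (k * n) \<le> real (m * j)" by (rule of_nat_mono)
              thus "ln (real (k * n)) \<le> ln (real (m * j))" using kn_ge1[of k n] kn by (subst ln_le_cancel_iff) auto
            qed
            finally show ?thesis using kn by simp
          next
            case False
            have "k * 1 \<le> k * n" "1 * n \<le> k * n" using kn by (intro mult_le_mono; simp)+
            hence "k \<le> k * n" "n \<le> k * n" by simp_all
            hence "k \<le> Zu" "n \<le> Zu" using False by linarith+
            thus ?thesis using B kn \<epsilon> aB by fastforce
          qed
        qed
        have lo: "a - \<epsilon> \<le> Max S"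
        proof -
          have "Zl \<le> max m j" using mj(3) by (simp add: N_def)
          then obtain k n where kn: "k \<in> {1..m}" "n \<in> {1..j}" "a - \<epsilon> \<le> X k n \<omega>"
            using Zl[OF mj(1,2)] unfolding a_def by blast
          have "X k n \<omega> \<in> S" using kn by (auto simp: S_def)
          hence "X k n \<omega> \<le> Max S" using finS by (intro Max_ge) auto
          thus ?thesis using kn by simp
        qed
        show "\<bar>Max {X k n \<omega> | k n. k \<in> {1..m} \<and> n \<in> {1..j}} - g (ln (real (m * j))) * s (ln (real (m * j))) - 0\<bar> < e"
          unfolding aeq S_def[symmetric] using up lo \<epsilon> by simp
      qed
    qed
  qed
qed

end

theorem theorem3:
  fixes M :: "'a measure"
    and \<phi> p g \<kappa> r C\<^sub>0 :: "real \<Rightarrow> real"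
    and X :: "nat \<Rightarrow> nat \<Rightarrow> 'a \<Rightarrow> real"
    and C :: real
  defines "\<psi> \<equiv> young_fenchel \<phi>"
    and "q \<equiv> gen_inverse p"
  assumes M: "prob_space M"
    and N: "orlicz_N_function \<phi>"
    and dens: "orlicz_density \<phi> p"
    and indep: "prob_space.indep_vars M (\<lambda>_. borel) (\<lambda>(k, n). X k n) ({1..} \<times> {1..})"
    and subg: "\<And>k n. k \<ge> 1 \<Longrightarrow> n \<ge> 1 \<Longrightarrow> phi_subgaussian M \<phi> (X k n)"
    and g_pos: "\<And>x. g x > 0" and g_mono: "mono g"
    and tau: "\<And>k n. k \<ge> 1 \<Longrightarrow> n \<ge> 1 \<Longrightarrow> tau_phi M \<phi> (X k n) \<le> g (ln (real (k * n)))"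
    and cond1: "\<exists>\<epsilon>\<^sub>0>0. \<forall>\<epsilon>. 0 < \<epsilon> \<and> \<epsilon> \<le> \<epsilon>\<^sub>0 \<longrightarrow>
        (\<integral>\<^sup>+ x\<in>{0..}. ennreal (\<psi> x * q x * exp (- \<epsilon> * q x / g (\<psi> x + ln 2))) \<partial>lborel) < \<infinity>"
    and \<kappa>_pos: "\<And>x. \<kappa> x > 0" and \<kappa>_mono: "strict_mono \<kappa>"
    and \<kappa>_deriv: "\<And>x. (\<kappa> has_real_derivative r x) (at x)"
    and r_mono: "mono_on {0<..} r"
    and C_pos: "C > 0"
    and cond2: "\<And>k n x. k \<ge> 1 \<Longrightarrow> n \<ge> 1 \<Longrightarrow> x > 0 \<Longrightarrow>
        measure M {\<omega> \<in> space M. X k n \<omega> / g (ln (real (k * n))) < x} \<le> exp (- C * exp (- \<kappa> x))"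
    and cond3: "\<And>x. x > 0 \<Longrightarrow> \<psi> x - \<kappa> (x * g x / g 0) \<ge> C\<^sub>0 x"
    and cond4: "\<exists>A>0. \<exists>\<epsilon>\<^sub>1>0. \<forall>\<epsilon>. 0 < \<epsilon> \<and> \<epsilon> \<le> \<epsilon>\<^sub>1 \<longrightarrow>
        (\<integral>\<^sup>+ y\<in>{A..}. ennreal (exp (- (C * y / 2) *
            exp (- \<kappa> (g (ln y) / g 0 * inv_pos \<psi> (ln y) - \<epsilon> / g (ln y))))) \<partial>lborel) < \<infinity> \<and>
        (\<integral>\<^sup>+ y\<in>{A..}. ennreal (\<psi> y * q y * exp (\<psi> y - C / 2 *
            exp (C\<^sub>0 y + \<epsilon> * r (y * g (\<psi> y) / g 0 - \<epsilon> / g (\<psi> y)) / g (\<psi> y)))) \<partial>lborel) < \<infinity>"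
  shows "AE \<omega> in M. double_lim
           (\<lambda>m j. Max {X k n \<omega> | k n. k \<in> {1..m} \<and> n \<in> {1..j}}
                  - g (ln (real (m * j))) * inv_pos \<psi> (ln (real (m * j)))) 0"
proof -
  have o: "orl \<phi> p" using N dens by (simp add: orl_def)
  have loc: "th3L \<phi> p M X g \<kappa> C"
    unfolding th3L_def th3L_axioms_def th3_def th3_axioms_def
    using o M subg g_pos g_mono tau indep \<kappa>_mono C_pos cond2 by blast
  have e1: "orl.\<psi> \<phi> = \<psi>" using orl.\<psi>_def[OF o] by (simp add: \<psi>_def)
  have e2: "orl.q p = q" using orl.q_eq[OF o] by (simp add: q_def)
  have e3: "orl.s \<phi> = inv_pos \<psi>" using orl.s_def[OF o] e1 by simp
  have c4: "\<exists>A>0. \<exists>\<epsilon>\<^sub>1>0. \<forall>\<epsilon>. 0 < \<epsilon> \<and> \<epsilon> \<le> \<epsilon>\<^sub>1 \<longrightarrow>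
        (\<integral>\<^sup>+ y\<in>{A..}. ennreal (exp (- (C * y / 2) *
            exp (- \<kappa> (g (ln y) / g 0 * inv_pos \<psi> (ln y) - \<epsilon> / g (ln y))))) \<partial>lborel) < \<infinity>"
    using cond4 by blast
  show ?thesis
    using th3L.main[OF loc] cond1 c4 unfolding e1 e2 e3 by blast
qed

end
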